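(* Let $n$ be a positive integer and let $\ell=\ell(n)$ satisfy $\ell=o(n)$. Pick a permutation $\sigma$ uniformly at random from the symmetric group $S_{2^n}$ acting on $\{0,1\}^n$, and let $\pi=\sigma\circ X_1$, where $X_1:\{0,1\}^n\to\{0,1\}^n$ flips the first bit of a string. Let $D_\sigma$ be the distribution on $\{0,1\}^n$ obtained as follows: start with the string $0^n$, then $\ell$ times independently apply either $\sigma$ or $\pi$, each with probability $1/2$, and output the resulting string. Suppose one is given a string $y\in\{0,1\}^n$ which is either drawn from $D_\sigma$ or else drawn uniformly from $\{0,1\}^n$. Then, given $y$ and black-box (quantum) query access to $\sigma$ and $\sigma^{-1}$, no quantum algorithm can determine which of the two cases holds with probability greater than $2/3$ using fewer than $2^{\Omega(\ell)}$ quantum queries to $\sigma$ and $\sigma^{-1}$. Here the success probability is taken over the random choice of $\sigma$, the choice of $y$, and the internal randomness of the algorithm.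
   Context: Query access to a permutation $\tau$ of $\{0,1\}^n$ means access to the unitary oracle $\mathcal{O}_\tau:\lvert x\rangle\lvert z\rangle\mapsto \lvert x\rangle\lvert z\oplus\tau(x)\rangle$ for $x,z\in\{0,1\}^n$, which may be applied in superposition; the algorithm has such access to both $\tau=\sigma$ and $\tau=\sigma^{-1}$, and each application of either oracle counts as one query. *)

theory Defs
  imports "HOL-Analysis.Analysis" "HOL-Library.Landau_Symbols" "HOL-Combinatorics.Permutations"
begin

text \<open>Strings in {0,1}^n are encoded as natural numbers below 2^n (binary
expansion); bitwise XOR is the library operation xor on nat.\<close>

definition strs :: "nat \<Rightarrow> nat set" where
  "strs n = {..<2^n}"

text \<open>X_1: flip the first bit (we take the first bit to be bit position 0).\<close>
definition flip1 :: "nat \<Rightarrow> nat" where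
  "flip1 x = Bit_Operations.xor x 1"

definition walk :: "(nat \<Rightarrow> nat) \<Rightarrow> bool list \<Rightarrow> nat" where
  "walk \<sigma> bs = foldl (\<lambda>x b. if b then \<sigma> x else (\<sigma> \<circ> flip1) x) 0 bs"

text \<open>Quantum register: computational basis states |x,z,w> with x,z in {0,1}^n
(query and answer registers) and w < m (workspace).\<close>
definition qbasis :: "nat \<Rightarrow> nat \<Rightarrow> (nat \<times> nat \<times> nat) set" where
  "qbasis n m = strs n \<times> strs n \<times> {..<m}"

type_synonym qmat = "(nat \<times> nat \<times> nat) \<Rightarrow> (nat \<times> nat \<times> nat) \<Rightarrow> complex"
type_synonym qvec = "(nat \<times> nat \<times> nat) \<Rightarrow> complex"

definition app :: "(nat \<times> nat \<times> nat) set \<Rightarrow> qmat \<Rightarrow> qvec \<Rightarrow> qvec" where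
  "app B U v = (\<lambda>i. \<Sum>j\<in>B. U i j * v j)"

definition is_unitary :: "(nat \<times> nat \<times> nat) set \<Rightarrow> qmat \<Rightarrow> bool" where
  "is_unitary B U \<longleftrightarrow>
     (\<forall>i\<in>B. \<forall>j\<in>B. (\<Sum>k\<in>B. cnj (U k i) * U k j) = (if i = j then 1 else 0))"

definition query_op :: "(nat \<Rightarrow> nat) \<Rightarrow> qmat" where
  "query_op \<tau> = (\<lambda>(x, z, w) (x', z', w').
      if x = x' \<and> w = w' \<and> z = Bit_Operations.xor z' (\<tau> x') then 1 else 0)"

definition ket0 :: qvec where
  "ket0 = (\<lambda>b. if b = (0, 0, 0) then 1 else 0)"

text \<open>A T-query algorithm on input string y (classical input) is given by the
workspace size m, unitaries U y 0, ..., U y T, the choice ch y k of which operator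
(True: sigma^-1, False: sigma) is used at query k+1, and an accepting set of
basis states Acc y for the final computational-basis measurement.\<close>
fun qstate :: "nat \<Rightarrow> nat \<Rightarrow> (nat \<Rightarrow> nat \<Rightarrow> qmat) \<Rightarrow> (nat \<Rightarrow> nat \<Rightarrow> bool)
      \<Rightarrow> (nat \<Rightarrow> nat) \<Rightarrow> nat \<Rightarrow> nat \<Rightarrow> qvec" where
  "qstate n m U ch \<sigma> y 0 = app (qbasis n m) (U y 0) ket0"
| "qstate n m U ch \<sigma> y (Suc k) =
     app (qbasis n m) (U y (Suc k))
       (app (qbasis n m) (query_op (if ch y k then inv \<sigma> else \<sigma>)) (qstate n m U ch \<sigma> y k))"

definition accept_prob :: "nat \<Rightarrow> nat \<Rightarrow> nat \<Rightarrow> (nat \<Rightarrow> nat \<Rightarrow> qmat) \<Rightarrow> (nat \<Rightarrow> nat \<Rightarrow> bool)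
      \<Rightarrow> (nat \<Rightarrow> (nat \<times> nat \<times> nat) set) \<Rightarrow> (nat \<Rightarrow> nat) \<Rightarrow> nat \<Rightarrow> real" where
  "accept_prob n m T U ch Acc \<sigma> y =
     (\<Sum>b\<in>qbasis n m \<inter> Acc y. (cmod (qstate n m U ch \<sigma> y T b))\<^sup>2)"

definition valid_alg :: "nat \<Rightarrow> nat \<Rightarrow> nat \<Rightarrow> (nat \<Rightarrow> nat \<Rightarrow> qmat) \<Rightarrow> bool" where
  "valid_alg n m T U \<longleftrightarrow> (\<forall>y\<in>strs n. \<forall>k\<le>T. is_unitary (qbasis n m) (U y k))"

definition perms :: "nat \<Rightarrow> (nat \<Rightarrow> nat) set" where
  "perms n = {\<sigma>. \<sigma> permutes strs n}"

definition pD :: "nat \<Rightarrow> nat \<Rightarrow> nat \<Rightarrow> nat \<Rightarrow> (nat \<Rightarrow> nat \<Rightarrow> qmat) \<Rightarrow> (nat \<Rightarrow> nat \<Rightarrow> bool)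
      \<Rightarrow> (nat \<Rightarrow> (nat \<times> nat \<times> nat) set) \<Rightarrow> real" where
  "pD n l m T U ch Acc =
     (\<Sum>\<sigma>\<in>perms n. \<Sum>bs\<in>{bs. length bs = l}.
         accept_prob n m T U ch Acc \<sigma> (walk \<sigma> bs))
     / (real (card (perms n)) * 2 ^ l)"

definition pU :: "nat \<Rightarrow> nat \<Rightarrow> nat \<Rightarrow> (nat \<Rightarrow> nat \<Rightarrow> qmat) \<Rightarrow> (nat \<Rightarrow> nat \<Rightarrow> bool)
      \<Rightarrow> (nat \<Rightarrow> (nat \<times> nat \<times> nat) set) \<Rightarrow> real" where
  "pU n m T U ch Acc =
     (\<Sum>\<sigma>\<in>perms n. \<Sum>y\<in>strs n. accept_prob n m T U ch Acc \<sigma> y)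
     / (real (card (perms n)) * 2 ^ n)"

end

theory Submission
  imports Defs
begin

lemma finite_strs[simp]: "finite (strs n)" by (simp add: strs_def)
lemma card_strs[simp]: "card (strs n) = 2^n" by (simp add: strs_def)
lemma finite_qbasis[simp]: "finite (qbasis n m)" by (simp add: qbasis_def)

lemma xor_strs: "x \<in> strs n \<Longrightarrow> y \<in> strs n \<Longrightarrow> Bit_Operations.xor x y \<in> strs n"
proof -
  assume a: "x \<in> strs n" "y \<in> strs n"
  have "take_bit n (Bit_Operations.xor x y) = Bit_Operations.xor (take_bit n x) (take_bit n y)"
    by simp
  also have "\<dots> = Bit_Operations.xor x y" using a
    by (metis strs_def lessThan_iff take_bit_nat_eq_self_iff)
  finally show ?thesis by (metis strs_def lessThan_iff take_bit_nat_less_exp)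
qed

lemma xor_cancel: "Bit_Operations.xor (Bit_Operations.xor z c) c = (z::nat)"
  by (simp add: xor.assoc)

lemma xor_eq_iff: "(z = Bit_Operations.xor z' c) \<longleftrightarrow> (z' = Bit_Operations.xor z (c::nat))"
  by (metis xor_cancel)

definition nrm :: "(nat \<times> nat \<times> nat) set \<Rightarrow> qvec \<Rightarrow> real" where
  "nrm B v = L2_set (\<lambda>b. cmod (v b)) B"

definition nrm2 :: "(nat \<times> nat \<times> nat) set \<Rightarrow> qvec \<Rightarrow> real" where
  "nrm2 B v = (\<Sum>b\<in>B. (cmod (v b))\<^sup>2)"

lemma nrm_sq: "nrm B v = sqrt (nrm2 B v)"
  by (simp add: nrm_def nrm2_def L2_set_def)

lemma nrm2_nonneg: "0 \<le> nrm2 B v" by (simp add: nrm2_def sum_nonneg)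

lemma cmod_sq_cnj: "complex_of_real ((cmod z)\<^sup>2) = cnj z * z"
  by (metis complex_norm_square mult.commute)

lemma unitary_preserves:
  assumes U: "is_unitary B U" and fin: "finite B"
  shows "nrm2 B (app B U v) = nrm2 B v"
proof -
  have "complex_of_real (nrm2 B (app B U v)) = (\<Sum>i\<in>B. cnj (\<Sum>j\<in>B. U i j * v j) * (\<Sum>j'\<in>B. U i j' * v j'))"
    by (simp only: nrm2_def app_def of_real_sum cmod_sq_cnj)
  also have "\<dots> = (\<Sum>i\<in>B. \<Sum>j\<in>B. \<Sum>j'\<in>B. cnj (v j) * v j' * (cnj (U i j) * U i j'))"
    by (simp add: sum_distrib_left sum_distrib_right mult_ac)
  also have "\<dots> = (\<Sum>j\<in>B. \<Sum>j'\<in>B. cnj (v j) * v j' * (\<Sum>i\<in>B. cnj (U i j) * U i j'))"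
    by (subst sum.swap, simp add: sum_distrib_left, subst sum.swap, simp add: sum_distrib_left)
  also have "\<dots> = (\<Sum>j\<in>B. \<Sum>j'\<in>B. cnj (v j) * v j' * (if j = j' then 1 else 0))"
    using U unfolding is_unitary_def by (intro sum.cong refl) auto
  also have "\<dots> = (\<Sum>j\<in>B. cnj (v j) * v j)"
    using fin by (simp add: if_distrib cong: if_cong)
  also have "\<dots> = complex_of_real (nrm2 B v)"
    by (simp only: nrm2_def of_real_sum cmod_sq_cnj)
  finally show ?thesis using of_real_eq_iff by blast
qed

lemma unitary_nrm: "is_unitary B U \<Longrightarrow> finite B \<Longrightarrow> nrm B (app B U v) = nrm B v"
  by (simp add: nrm_sq unitary_preserves)

lemma app_diff: "app B U (\<lambda>b. v b - w b) = (\<lambda>b. app B U v b - app B U w b)"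
  by (simp add: app_def algebra_simps sum_subtractf)

lemma nrm_triangle: "nrm B (\<lambda>b. v b + w b) \<le> nrm B v + nrm B w"
proof -
  have "nrm B (\<lambda>b. v b + w b) \<le> L2_set (\<lambda>b. cmod (v b) + cmod (w b)) B"
    unfolding nrm_def by (rule L2_set_mono) (auto simp: norm_triangle_ineq)
  also have "\<dots> \<le> nrm B v + nrm B w" unfolding nrm_def by (rule L2_set_triangle_ineq)
  finally show ?thesis .
qed

lemma nrm_nonneg: "0 \<le> nrm B v" by (simp add: nrm_def)

lemma nrm_cong: "(\<And>b. b \<in> B \<Longrightarrow> v b = w b) \<Longrightarrow> nrm B v = nrm B w"
  unfolding nrm_def by (rule L2_set_cong) auto

lemma qbasis_mem: "(x, z, w) \<in> qbasis n m \<longleftrightarrow> x \<in> strs n \<and> z \<in> strs n \<and> w < m"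
  by (simp add: qbasis_def)

lemma query_app:
  assumes tau: "\<tau> permutes strs n" and b: "(x, z, w) \<in> qbasis n m"
  shows "app (qbasis n m) (query_op \<tau>) v (x, z, w) = v (x, Bit_Operations.xor z (\<tau> x), w)"
proof -
  let ?j0 = "(x, Bit_Operations.xor z (\<tau> x), w)"
  have xs: "x \<in> strs n" "z \<in> strs n" "w < m" using b by (auto simp: qbasis_mem)
  have "\<tau> x \<in> strs n" using tau xs(1) by (simp add: permutes_in_image)
  hence j0: "?j0 \<in> qbasis n m" using xs by (simp add: qbasis_mem xor_strs)
  have "app (qbasis n m) (query_op \<tau>) v (x, z, w) = (\<Sum>j\<in>qbasis n m. if j = ?j0 then v j else 0)"
    unfolding app_def
  proof (intro sum.cong refl)
    fix j assume "j \<in> qbasis n m"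
    obtain x' z' w' where jj: "j = (x', z', w')" by (cases j) auto
    show "query_op \<tau> (x, z, w) j * v j = (if j = ?j0 then v j else 0)"
      unfolding jj query_op_def using xor_eq_iff[of z z' "\<tau> x"] by auto
  qed
  also have "\<dots> = v ?j0" using j0 by simp
  finally show ?thesis .
qed

lemma query_nrm2:
  assumes tau: "\<tau> permutes strs n"
  shows "nrm2 (qbasis n m) (app (qbasis n m) (query_op \<tau>) v) = nrm2 (qbasis n m) v"
proof -
  let ?g = "\<lambda>(x, z, w). (x, Bit_Operations.xor z (\<tau> x), w)"
  have "nrm2 (qbasis n m) (app (qbasis n m) (query_op \<tau>) v) = (\<Sum>b\<in>qbasis n m. (cmod (v (?g b)))\<^sup>2)"
    unfolding nrm2_def
    by (intro sum.cong refl) (auto simp: query_app[OF tau])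
  also have "\<dots> = nrm2 (qbasis n m) v"
    unfolding nrm2_def
    by (rule sum.reindex_bij_witness[where i = ?g and j = ?g])
       (auto simp: xor_cancel qbasis_mem tau xor_strs permutes_in_image)
  finally show ?thesis .
qed

lemma query_nrm: "\<tau> permutes strs n \<Longrightarrow> nrm (qbasis n m) (app (qbasis n m) (query_op \<tau>) v) = nrm (qbasis n m) v"
  by (simp add: nrm_sq query_nrm2)

definition qw :: "nat \<Rightarrow> nat \<Rightarrow> qvec \<Rightarrow> nat \<Rightarrow> real" where
  "qw n m v x = (\<Sum>p\<in>strs n \<times> {..<m}. (cmod (v (x, fst p, snd p)))\<^sup>2)"

lemma qw_nonneg: "0 \<le> qw n m v x" by (simp add: qw_def sum_nonneg)

lemma nrm2_qw: "nrm2 (qbasis n m) v = (\<Sum>x\<in>strs n. qw n m v x)"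
  unfolding nrm2_def qw_def qbasis_def
  by (simp add: sum.cartesian_product split_def)

lemma qw_shift:
  assumes c: "c \<in> strs n"
  shows "(\<Sum>p\<in>strs n \<times> {..<m}. f (Bit_Operations.xor (fst p) c, snd p)) = (\<Sum>p\<in>strs n \<times> {..<m}. f p)"
  by (rule sum.reindex_bij_witness[where i = "\<lambda>p. (Bit_Operations.xor (fst p) c, snd p)"
        and j = "\<lambda>p. (Bit_Operations.xor (fst p) c, snd p)"])
     (auto simp: xor_cancel c intro!: xor_strs)

lemma sq_diff_le: "(cmod (a - b))\<^sup>2 \<le> 2 * (cmod a)\<^sup>2 + 2 * (cmod b)\<^sup>2"
proof -
  have "cmod (a - b) \<le> cmod a + cmod b" by (rule norm_triangle_ineq4)
  hence "(cmod (a - b))\<^sup>2 \<le> (cmod a + cmod b)\<^sup>2" by (simp add: power_mono)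
  also have "\<dots> \<le> 2 * (cmod a)\<^sup>2 + 2 * (cmod b)\<^sup>2"
  proof -
    have "0 \<le> (cmod a - cmod b)\<^sup>2" by simp
    thus ?thesis by (simp add: power2_eq_square algebra_simps)
  qed
  finally show ?thesis .
qed

lemma query_diff_nrm2:
  assumes s: "\<sigma> permutes strs n" and t: "\<tau> permutes strs n" and E: "finite E"
    and dif: "\<And>x. x \<in> strs n \<Longrightarrow> \<sigma> x \<noteq> \<tau> x \<Longrightarrow> x \<in> E"
  shows "nrm2 (qbasis n m) (\<lambda>b. app (qbasis n m) (query_op \<sigma>) v b - app (qbasis n m) (query_op \<tau>) v b)
         \<le> 4 * (\<Sum>x\<in>E. qw n m v x)"
proof -
  define D where "D x = (\<Sum>p\<in>strs n \<times> {..<m}.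
      (cmod (v (x, Bit_Operations.xor (fst p) (\<sigma> x), snd p) - v (x, Bit_Operations.xor (fst p) (\<tau> x), snd p)))\<^sup>2)" for x
  have "nrm2 (qbasis n m) (\<lambda>b. app (qbasis n m) (query_op \<sigma>) v b - app (qbasis n m) (query_op \<tau>) v b)
      = (\<Sum>b\<in>qbasis n m. (cmod (v (fst b, Bit_Operations.xor (fst (snd b)) (\<sigma> (fst b)), snd (snd b))
           - v (fst b, Bit_Operations.xor (fst (snd b)) (\<tau> (fst b)), snd (snd b))))\<^sup>2)"
    unfolding nrm2_def by (intro sum.cong refl) (auto simp: query_app[OF s] query_app[OF t])
  also have "\<dots> = (\<Sum>x\<in>strs n. D x)"
    unfolding D_def qbasis_def by (simp add: sum.cartesian_product split_def)
  also have "\<dots> = (\<Sum>x\<in>strs n \<inter> E. D x)"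
    by (rule sum.mono_neutral_right) (auto simp: D_def dest: dif)
  also have "\<dots> \<le> (\<Sum>x\<in>strs n \<inter> E. 4 * qw n m v x)"
  proof (rule sum_mono)
    fix x assume x: "x \<in> strs n \<inter> E"
    have "D x \<le> (\<Sum>p\<in>strs n \<times> {..<m}. 2 * (cmod (v (x, Bit_Operations.xor (fst p) (\<sigma> x), snd p)))\<^sup>2
             + 2 * (cmod (v (x, Bit_Operations.xor (fst p) (\<tau> x), snd p)))\<^sup>2)"
      unfolding D_def by (rule sum_mono) (rule sq_diff_le)
    also have "\<dots> = 2 * qw n m v x + 2 * qw n m v x"
    proof -
      have sx: "\<sigma> x \<in> strs n" "\<tau> x \<in> strs n" using x s t by (auto simp: permutes_in_image)
      have e1: "(\<Sum>p\<in>strs n \<times> {..<m}. (cmod (v (x, Bit_Operations.xor (fst p) (\<sigma> x), snd p)))\<^sup>2) = qw n m v x"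
        unfolding qw_def using qw_shift[OF sx(1), where m=m and f="\<lambda>p. (cmod (v (x, fst p, snd p)))\<^sup>2"] by simp
      have e2: "(\<Sum>p\<in>strs n \<times> {..<m}. (cmod (v (x, Bit_Operations.xor (fst p) (\<tau> x), snd p)))\<^sup>2) = qw n m v x"
        unfolding qw_def using qw_shift[OF sx(2), where m=m and f="\<lambda>p. (cmod (v (x, fst p, snd p)))\<^sup>2"] by simp
      show ?thesis unfolding sum.distrib sum_distrib_left[symmetric] e1 e2 ..
    qed
    finally show "D x \<le> 4 * qw n m v x" by simp
  qed
  also have "\<dots> \<le> (\<Sum>x\<in>E. 4 * qw n m v x)"
    by (rule sum_mono2) (auto simp: E qw_nonneg)
  finally show ?thesis by (simp add: sum_distrib_left)
qed

lemma sqrt_sum_le: "finite E \<Longrightarrow> (\<And>x. 0 \<le> f x) \<Longrightarrow> sqrt (\<Sum>x\<in>E. f x) \<le> (\<Sum>x\<in>E. sqrt (f x))"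
proof -
  assume "finite E" "\<And>x. 0 \<le> (f x::real)"
  have "sqrt (\<Sum>x\<in>E. f x) = L2_set (\<lambda>x. sqrt (f x)) E"
    unfolding L2_set_def using \<open>\<And>x. 0 \<le> f x\<close> by simp
  also have "\<dots> \<le> (\<Sum>x\<in>E. sqrt (f x))" by (rule L2_set_le_sum) (simp add: \<open>\<And>x. 0 \<le> f x\<close>)
  finally show ?thesis .
qed

lemma query_diff_nrm:
  assumes s: "\<sigma> permutes strs n" and t: "\<tau> permutes strs n" and E: "finite E"
    and dif: "\<And>x. x \<in> strs n \<Longrightarrow> \<sigma> x \<noteq> \<tau> x \<Longrightarrow> x \<in> E"
  shows "nrm (qbasis n m) (\<lambda>b. app (qbasis n m) (query_op \<sigma>) v b - app (qbasis n m) (query_op \<tau>) v b)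
         \<le> 2 * (\<Sum>x\<in>E. sqrt (qw n m v x))"
proof -
  have "nrm (qbasis n m) (\<lambda>b. app (qbasis n m) (query_op \<sigma>) v b - app (qbasis n m) (query_op \<tau>) v b)
      \<le> sqrt (4 * (\<Sum>x\<in>E. qw n m v x))"
    unfolding nrm_sq by (rule real_sqrt_le_mono) (rule query_diff_nrm2[OF assms])
  also have "\<dots> = 2 * sqrt (\<Sum>x\<in>E. qw n m v x)" by (simp add: real_sqrt_mult)
  also have "\<dots> \<le> 2 * (\<Sum>x\<in>E. sqrt (qw n m v x))"
    using sqrt_sum_le[OF E, of "qw n m v"] by (simp add: qw_nonneg)
  finally show ?thesis .
qed



lemma perm_inv_permutes: "\<sigma> permutes S \<Longrightarrow> inv \<sigma> permutes S"
  by (rule permutes_inv)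

lemma ket0_nrm2: "nrm2 B ket0 \<le> 1" if "finite B"
proof -
  have "nrm2 B ket0 = (\<Sum>b\<in>B. if b = (0,0,0) then 1 else 0)"
    unfolding nrm2_def ket0_def by (intro sum.cong refl) auto
  also have "\<dots> \<le> 1" using that by (simp add: sum.delta)
  finally show ?thesis .
qed

lemma state_nrm2:
  assumes V: "valid_alg n m T U" and y: "y \<in> strs n" and s: "\<sigma> permutes strs n"
  shows "t \<le> T \<Longrightarrow> nrm2 (qbasis n m) (qstate n m U ch \<sigma> y t) \<le> 1"
proof (induction t)
  case 0
  have "is_unitary (qbasis n m) (U y 0)" using V y unfolding valid_alg_def by auto
  thus ?case by (simp add: unitary_preserves ket0_nrm2)
next
  case (Suc t)
  have "is_unitary (qbasis n m) (U y (Suc t))" using V y Suc.prems unfolding valid_alg_def by auto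
  moreover have "(if ch y t then inv \<sigma> else \<sigma>) permutes strs n" using s by (simp add: permutes_inv)
  ultimately show ?case using Suc by (simp add: unitary_preserves query_nrm2)
qed

definition Oq :: "nat \<Rightarrow> nat \<Rightarrow> (nat \<Rightarrow> nat \<Rightarrow> bool) \<Rightarrow> nat \<Rightarrow> (nat \<Rightarrow> nat) \<Rightarrow> nat \<Rightarrow> qvec \<Rightarrow> qvec" where
  "Oq n m ch y \<sigma> t v = app (qbasis n m) (query_op (if ch y t then inv \<sigma> else \<sigma>)) v"

lemma hybrid:
  assumes V: "valid_alg n m T U" and y: "y \<in> strs n" and s: "\<sigma> permutes strs n" and tp: "\<tau> permutes strs n"
  shows "T' \<le> T \<Longrightarrow> nrm (qbasis n m) (\<lambda>b. qstate n m U ch \<sigma> y T' b - qstate n m U ch \<tau> y T' b)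
     \<le> (\<Sum>t<T'. nrm (qbasis n m) (\<lambda>b. Oq n m ch y \<sigma> t (qstate n m U ch \<tau> y t) b - Oq n m ch y \<tau> t (qstate n m U ch \<tau> y t) b))"
proof (induction T')
  case 0
  have "nrm (qbasis n m) (\<lambda>b. qstate n m U ch \<sigma> y 0 b - qstate n m U ch \<tau> y 0 b) = nrm (qbasis n m) (\<lambda>b. 0)"
    by simp
  also have "\<dots> = 0" by (simp add: nrm_def L2_set_def)
  finally show ?case by simp
next
  case (Suc t)
  let ?B = "qbasis n m"
  let ?ps = "qstate n m U ch \<sigma> y t" and ?pt = "qstate n m U ch \<tau> y t"
  have Uu: "is_unitary ?B (U y (Suc t))" using V y Suc.prems unfolding valid_alg_def by auto
  have ps: "(if ch y t then inv \<sigma> else \<sigma>) permutes strs n" using s by (simp add: permutes_inv)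
  have "nrm ?B (\<lambda>b. qstate n m U ch \<sigma> y (Suc t) b - qstate n m U ch \<tau> y (Suc t) b)
      = nrm ?B (app ?B (U y (Suc t)) (\<lambda>b. Oq n m ch y \<sigma> t ?ps b - Oq n m ch y \<tau> t ?pt b))"
    by (simp add: app_diff Oq_def)
  also have "\<dots> = nrm ?B (\<lambda>b. Oq n m ch y \<sigma> t ?ps b - Oq n m ch y \<tau> t ?pt b)"
    using Uu by (simp add: unitary_nrm)
  also have "\<dots> = nrm ?B (\<lambda>b. Oq n m ch y \<sigma> t (\<lambda>b. ?ps b - ?pt b) b
        + (Oq n m ch y \<sigma> t ?pt b - Oq n m ch y \<tau> t ?pt b))"
    by (simp add: Oq_def app_diff)
  also have "\<dots> \<le> nrm ?B (Oq n m ch y \<sigma> t (\<lambda>b. ?ps b - ?pt b))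
        + nrm ?B (\<lambda>b. Oq n m ch y \<sigma> t ?pt b - Oq n m ch y \<tau> t ?pt b)"
    by (rule nrm_triangle)
  also have "nrm ?B (Oq n m ch y \<sigma> t (\<lambda>b. ?ps b - ?pt b)) = nrm ?B (\<lambda>b. ?ps b - ?pt b)"
    unfolding Oq_def by (rule query_nrm[OF ps])
  finally show ?case using Suc by simp
qed

lemma sq_diff_abs: "\<bar>a\<^sup>2 - c\<^sup>2\<bar> = \<bar>a - c\<bar> * \<bar>a + c\<bar>" for a c :: real
proof -
  have "a\<^sup>2 - c\<^sup>2 = (a - c) * (a + c)" by (simp add: power2_eq_square algebra_simps)
  thus ?thesis by (simp add: abs_mult)
qed

lemma acc_diff:
  assumes V: "valid_alg n m T U" and y: "y \<in> strs n" and s: "\<sigma> permutes strs n" and tp: "\<tau> permutes strs n"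
  shows "\<bar>accept_prob n m T U ch Acc \<sigma> y - accept_prob n m T U ch Acc \<tau> y\<bar>
     \<le> 2 * nrm (qbasis n m) (\<lambda>b. qstate n m U ch \<sigma> y T b - qstate n m U ch \<tau> y T b)"
proof -
  let ?B = "qbasis n m" and ?S = "qbasis n m \<inter> Acc y"
  let ?a = "\<lambda>b. cmod (qstate n m U ch \<sigma> y T b)" and ?c = "\<lambda>b. cmod (qstate n m U ch \<tau> y T b)"
  let ?d = "\<lambda>b. cmod (qstate n m U ch \<sigma> y T b - qstate n m U ch \<tau> y T b)"
  have "\<bar>accept_prob n m T U ch Acc \<sigma> y - accept_prob n m T U ch Acc \<tau> y\<bar> = \<bar>\<Sum>b\<in>?S. (?a b)\<^sup>2 - (?c b)\<^sup>2\<bar>"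
    unfolding accept_prob_def by (simp add: sum_subtractf)
  also have "\<dots> \<le> (\<Sum>b\<in>?S. \<bar>(?a b)\<^sup>2 - (?c b)\<^sup>2\<bar>)" by (rule sum_abs)
  also have "\<dots> \<le> (\<Sum>b\<in>?B. \<bar>?d b\<bar> * \<bar>?a b + ?c b\<bar>)"
  proof -
    have "(\<Sum>b\<in>?S. \<bar>(?a b)\<^sup>2 - (?c b)\<^sup>2\<bar>) \<le> (\<Sum>b\<in>?S. \<bar>?d b\<bar> * \<bar>?a b + ?c b\<bar>)"
    proof (rule sum_mono)
      fix b
      have "\<bar>(?a b)\<^sup>2 - (?c b)\<^sup>2\<bar> = \<bar>?a b - ?c b\<bar> * \<bar>?a b + ?c b\<bar>"
        using sq_diff_abs[of "?a b" "?c b"] .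
      also have "\<dots> \<le> \<bar>?d b\<bar> * \<bar>?a b + ?c b\<bar>"
        by (intro mult_right_mono) (auto simp: norm_triangle_ineq3)
      finally show "\<bar>(?a b)\<^sup>2 - (?c b)\<^sup>2\<bar> \<le> \<bar>?d b\<bar> * \<bar>?a b + ?c b\<bar>" .
    qed
    also have "\<dots> \<le> (\<Sum>b\<in>?B. \<bar>?d b\<bar> * \<bar>?a b + ?c b\<bar>)"
      by (rule sum_mono2) auto
    finally show ?thesis .
  qed
  also have "\<dots> \<le> L2_set ?d ?B * L2_set (\<lambda>b. ?a b + ?c b) ?B" by (rule L2_set_mult_ineq)
  also have "\<dots> \<le> L2_set ?d ?B * 2"
  proof (rule mult_left_mono)
    have "L2_set (\<lambda>b. ?a b + ?c b) ?B \<le> L2_set ?a ?B + L2_set ?c ?B" by (rule L2_set_triangle_ineq)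
    also have "L2_set ?a ?B \<le> 1"
      using state_nrm2[OF V y s order.refl] by (simp add: nrm2_def L2_set_def)
    also have "L2_set ?c ?B \<le> 1"
      using state_nrm2[OF V y tp order.refl] by (simp add: nrm2_def L2_set_def)
    finally show "L2_set (\<lambda>b. ?a b + ?c b) ?B \<le> 2" by simp
  qed simp
  finally show ?thesis by (simp add: nrm_def mult.commute)
qed

lemma sum2_le: "(\<And>x. 0 \<le> f x) \<Longrightarrow> (\<Sum>x\<in>{a, b}. f x) \<le> f a + (f b :: real)"
  by (cases "a = b") auto

definition qq :: "nat \<Rightarrow> nat \<Rightarrow> (nat \<Rightarrow> nat \<Rightarrow> qmat) \<Rightarrow> (nat \<Rightarrow> nat \<Rightarrow> bool) \<Rightarrow> (nat \<Rightarrow> nat) \<Rightarrow> nat \<Rightarrow> nat \<Rightarrow> nat \<Rightarrow> real" where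
  "qq n m U ch \<sigma> y t x = qw n m (qstate n m U ch \<sigma> y t) x"

lemma qq_nonneg: "0 \<le> qq n m U ch \<sigma> y t x" by (simp add: qq_def qw_nonneg)

lemma qq_sum: 
  assumes V: "valid_alg n m T U" and y: "y \<in> strs n" and s: "\<sigma> permutes strs n" and t: "t \<le> T"
  shows "(\<Sum>x\<in>strs n. qq n m U ch \<sigma> y t x) \<le> 1"
  using state_nrm2[OF V y s t] by (simp add: qq_def nrm2_qw)

lemma qq_le1:
  assumes V: "valid_alg n m T U" and y: "y \<in> strs n" and s: "\<sigma> permutes strs n" and t: "t \<le> T"
    and x: "x \<in> strs n"
  shows "qq n m U ch \<sigma> y t x \<le> 1"
proof -
  have "qq n m U ch \<sigma> y t x \<le> (\<Sum>x\<in>strs n. qq n m U ch \<sigma> y t x)"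
    by (rule member_le_sum) (auto simp: x qq_nonneg)
  thus ?thesis using qq_sum[OF assms(1-4), where ch=ch] by linarith
qed

lemma swap_bound:
  assumes V: "valid_alg n m T U" and y: "y \<in> strs n" and tp: "\<tau> permutes strs n"
    and u: "u \<in> strs n" and r: "r \<in> strs n"
  shows "\<bar>accept_prob n m T U ch Acc (\<tau> \<circ> Transposition.transpose u r) y - accept_prob n m T U ch Acc \<tau> y\<bar>
    \<le> 4 * (\<Sum>t<T. sqrt (qq n m U ch \<tau> y t u) + sqrt (qq n m U ch \<tau> y t r)
                   + sqrt (qq n m U ch \<tau> y t (\<tau> u)) + sqrt (qq n m U ch \<tau> y t (\<tau> r)))"
proof -
  let ?s = "\<tau> \<circ> Transposition.transpose u r"
  let ?F = "\<lambda>t. sqrt (qq n m U ch \<tau> y t u) + sqrt (qq n m U ch \<tau> y t r)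
                   + sqrt (qq n m U ch \<tau> y t (\<tau> u)) + sqrt (qq n m U ch \<tau> y t (\<tau> r))"
  have sp: "?s permutes strs n" using tp u r by (simp add: permutes_compose permutes_swap_id)
  have step: "nrm (qbasis n m) (\<lambda>b. Oq n m ch y ?s t (qstate n m U ch \<tau> y t) b - Oq n m ch y \<tau> t (qstate n m U ch \<tau> y t) b)
     \<le> 2 * ?F t" for t
  proof (cases "ch y t")
    case False
    have "nrm (qbasis n m) (\<lambda>b. Oq n m ch y ?s t (qstate n m U ch \<tau> y t) b - Oq n m ch y \<tau> t (qstate n m U ch \<tau> y t) b)
        \<le> 2 * (\<Sum>x\<in>{u, r}. sqrt (qw n m (qstate n m U ch \<tau> y t) x))"
      unfolding Oq_def using False
      by (simp, intro query_diff_nrm[OF sp tp]) (auto simp: Transposition.transpose_def split: if_splits)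
    also have "\<dots> \<le> 2 * (sqrt (qq n m U ch \<tau> y t u) + sqrt (qq n m U ch \<tau> y t r))"
      using sum2_le[of "\<lambda>x. sqrt (qw n m (qstate n m U ch \<tau> y t) x)" u r] by (simp add: qw_nonneg qq_def)
    also have "\<dots> \<le> 2 * ?F t" by (simp add: qq_nonneg)
    finally show ?thesis .
  next
    case True
    have dif: "x \<in> {\<tau> u, \<tau> r}" if x: "x \<in> strs n" and ne: "inv ?s x \<noteq> inv \<tau> x" for x
    proof (rule ccontr)
      assume nx: "x \<notin> {\<tau> u, \<tau> r}"
      define a where "a = inv \<tau> x"
      have ta: "\<tau> a = x" unfolding a_def using permutes_inverses(1)[OF tp] by simp
      have "a \<noteq> u" "a \<noteq> r" using nx ta by auto
      hence "?s a = x" using ta by (simp add: transpose_apply_other)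
      hence "inv ?s x = a" using permutes_inv_eq[OF sp] by blast
      thus False using ne a_def by simp
    qed
    have "nrm (qbasis n m) (\<lambda>b. Oq n m ch y ?s t (qstate n m U ch \<tau> y t) b - Oq n m ch y \<tau> t (qstate n m U ch \<tau> y t) b)
        \<le> 2 * (\<Sum>x\<in>{\<tau> u, \<tau> r}. sqrt (qw n m (qstate n m U ch \<tau> y t) x))"
      unfolding Oq_def using True
      by (simp, intro query_diff_nrm[OF permutes_inv[OF sp] permutes_inv[OF tp]]) (use dif in auto)
    also have "\<dots> \<le> 2 * (sqrt (qq n m U ch \<tau> y t (\<tau> u)) + sqrt (qq n m U ch \<tau> y t (\<tau> r)))"
      using sum2_le[of "\<lambda>x. sqrt (qw n m (qstate n m U ch \<tau> y t) x)" "\<tau> u" "\<tau> r"] by (simp add: qw_nonneg qq_def)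
    also have "\<dots> \<le> 2 * ?F t" by (simp add: qq_nonneg)
    finally show ?thesis .
  qed
  have "\<bar>accept_prob n m T U ch Acc ?s y - accept_prob n m T U ch Acc \<tau> y\<bar>
      \<le> 2 * nrm (qbasis n m) (\<lambda>b. qstate n m U ch ?s y T b - qstate n m U ch \<tau> y T b)"
    by (rule acc_diff[OF V y sp tp])
  also have "\<dots> \<le> 2 * (\<Sum>t<T. nrm (qbasis n m) (\<lambda>b. Oq n m ch y ?s t (qstate n m U ch \<tau> y t) b - Oq n m ch y \<tau> t (qstate n m U ch \<tau> y t) b))"
    using hybrid[OF V y sp tp order.refl] by simp
  also have "\<dots> \<le> 2 * (\<Sum>t<T. 2 * ?F t)"
    using step by (intro mult_left_mono sum_mono) auto
  finally show ?thesis by (simp add: sum_distrib_left)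
qed



definition inp :: "nat \<Rightarrow> bool \<Rightarrow> nat" where
  "inp x c = (if c then x else flip1 x)"

definition wlk :: "(nat \<Rightarrow> nat) \<Rightarrow> nat \<Rightarrow> bool list \<Rightarrow> nat" where
  "wlk \<sigma> x bs = foldl (\<lambda>x b. \<sigma> (inp x b)) x bs"

fun ins :: "(nat \<Rightarrow> nat) \<Rightarrow> nat \<Rightarrow> bool list \<Rightarrow> nat list" where
  "ins \<sigma> x [] = []"
| "ins \<sigma> x (b # bs) = inp x b # ins \<sigma> (\<sigma> (inp x b)) bs"

lemma walk_wf: "walk \<sigma> bs = wlk \<sigma> 0 bs"
proof -
  have "(\<lambda>x b. if b then \<sigma> x else (\<sigma> \<circ> flip1) x) = (\<lambda>x b. \<sigma> (inp x b))"
    by (auto simp: inp_def fun_eq_iff)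
  thus ?thesis by (simp add: walk_def wlk_def)
qed

lemma wf_Nil[simp]: "wlk \<sigma> x [] = x" by (simp add: wlk_def)
lemma wf_Cons[simp]: "wlk \<sigma> x (b # bs) = wlk \<sigma> (\<sigma> (inp x b)) bs" by (simp add: wlk_def)
lemma wf_append: "wlk \<sigma> x (a @ b) = wlk \<sigma> (wlk \<sigma> x a) b" by (simp add: wlk_def)
lemma wf_snoc: "wlk \<sigma> x (a @ [c]) = \<sigma> (inp (wlk \<sigma> x a) c)" by (simp add: wlk_def)

lemma flip1_flip1[simp]: "flip1 (flip1 x) = x"
  by (simp add: flip1_def xor.assoc)

lemma flip1_neq[simp]: "flip1 x \<noteq> x"
proof -
  have "odd x \<Longrightarrow> x \<noteq> 0" by (metis even_zero)
  thus ?thesis unfolding flip1_def xor_one_eq by (cases "even x") auto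
qed

lemma flip1_neq'[simp]: "x \<noteq> flip1 x" using flip1_neq by metis

lemma flip1_inj: "flip1 x = flip1 y \<longleftrightarrow> x = y" by (metis flip1_flip1)

lemma flip1_strs: "0 < n \<Longrightarrow> x \<in> strs n \<Longrightarrow> flip1 x \<in> strs n"
proof -
  assume n: "0 < n" and x: "x \<in> strs n"
  have "even ((2::nat)^n)" using n by simp
  hence "even x \<Longrightarrow> x + 1 < 2^n" using x unfolding strs_def
    by (metis lessThan_iff Suc_eq_plus1 Suc_lessI even_Suc)
  thus ?thesis using x unfolding flip1_def xor_one_eq strs_def by auto
qed

lemma inp_strs: "0 < n \<Longrightarrow> x \<in> strs n \<Longrightarrow> inp x c \<in> strs n"
  by (simp add: inp_def flip1_strs)

lemma inp_inj: "inp x c = inp y c \<longleftrightarrow> x = y"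
  by (simp add: inp_def flip1_inj)

lemma inp_cases: "inp x c = x \<or> inp x c = flip1 x" by (simp add: inp_def)

lemma wf_strs: "0 < n \<Longrightarrow> \<sigma> permutes strs n \<Longrightarrow> x \<in> strs n \<Longrightarrow> wlk \<sigma> x bs \<in> strs n"
  by (induction bs arbitrary: x) (auto simp: inp_strs permutes_in_image)

lemma length_ins[simp]: "length (ins \<sigma> x bs) = length bs"
  by (induction bs arbitrary: x) auto

lemma ins_append: "ins \<sigma> x (a @ b) = ins \<sigma> x a @ ins \<sigma> (wlk \<sigma> x a) b"
  by (induction a arbitrary: x) auto

lemma ins_nth: "j < length bs \<Longrightarrow> ins \<sigma> x bs ! j = inp (wlk \<sigma> x (take j bs)) (bs ! j)"
proof (induction bs arbitrary: x j)
  case Nil thus ?case by simp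
next
  case (Cons b bs) thus ?case by (cases j) auto
qed

lemma wf_take_Suc: "j < length bs \<Longrightarrow> wlk \<sigma> x (take (Suc j) bs) = \<sigma> (ins \<sigma> x bs ! j)"
  by (simp add: ins_nth take_Suc_conv_app_nth wf_snoc)

lemma ins_strs: "0 < n \<Longrightarrow> \<sigma> permutes strs n \<Longrightarrow> x \<in> strs n \<Longrightarrow> set (ins \<sigma> x bs) \<subseteq> strs n"
  by (induction bs arbitrary: x) (auto simp: inp_strs permutes_in_image)

lemma agree_wf:
  assumes "\<And>v. v \<in> set (ins \<sigma> x bs) \<Longrightarrow> \<sigma>' v = \<sigma> v"
  shows "wlk \<sigma>' x bs = wlk \<sigma> x bs \<and> ins \<sigma>' x bs = ins \<sigma> x bs"
  using assms by (induction bs arbitrary: x) auto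

lemma wf_inj:
  assumes "\<sigma> permutes strs n" "0 < n"
  shows "inj_on (\<lambda>x. wlk \<sigma> x bs) (strs n)"
  using assms
proof (induction bs)
  case Nil thus ?case by simp
next
  case (Cons b bs)
  show ?case
  proof (rule inj_onI)
    fix x x' assume x: "x \<in> strs n" "x' \<in> strs n" and e: "wlk \<sigma> x (b # bs) = wlk \<sigma> x' (b # bs)"
    have "\<sigma> (inp x b) \<in> strs n" "\<sigma> (inp x' b) \<in> strs n" using x Cons.prems
      by (auto simp: inp_strs permutes_in_image)
    hence "\<sigma> (inp x b) = \<sigma> (inp x' b)" using e Cons inj_onD by fastforce
    hence "inp x b = inp x' b" using permutes_inj[OF Cons.prems(1)] by (auto dest: injD)
    thus "x = x'" by (simp add: inp_inj)
  qed
qed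

lemma wf_bij:
  assumes "\<sigma> permutes strs n" "0 < n"
  shows "bij_betw (\<lambda>x. wlk \<sigma> x bs) (strs n) (strs n)"
proof -
  have "(\<lambda>x. wlk \<sigma> x bs) ` strs n = strs n"
    by (rule endo_inj_surj) (auto simp: wf_inj[OF assms] wf_strs[OF assms(2,1)])
  thus ?thesis using wf_inj[OF assms] by (simp add: bij_betw_def)
qed



definition hcode :: "bool list \<Rightarrow> nat" where
  "hcode a = foldl (\<lambda>i c. 2 * i + of_bool c) 1 a"

lemma hcode_Nil[simp]: "hcode [] = 1" by (simp add: hcode_def)
lemma hcode_snoc[simp]: "hcode (a @ [c]) = 2 * hcode a + of_bool c" by (simp add: hcode_def)

lemma hcode_pos: "1 \<le> hcode a"
  by (induction a rule: rev_induct) auto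

lemma hcode_less: "hcode a < 2 ^ (length a + 1)"
  by (induction a rule: rev_induct) auto

lemma hcode_inj: "hcode a = hcode a' \<Longrightarrow> a = a'"
proof (induction a arbitrary: a' rule: rev_induct)
  case Nil
  show ?case
  proof (cases a' rule: rev_exhaust)
    case (snoc b c) thus ?thesis using Nil hcode_pos[of b] by simp
  qed simp
next
  case (snoc x xs)
  show ?case
  proof (cases a' rule: rev_exhaust)
    case Nil thus ?thesis using snoc hcode_pos[of xs] by simp
  next
    case (snoc b c)
    have e: "2 * hcode xs + of_bool x = 2 * hcode b + of_bool c" using snoc.prems snoc by simp
    have "x = odd (2 * hcode xs + of_bool x)" by simp
    also have "\<dots> = odd (2 * hcode b + of_bool c)" using e by simp
    also have "\<dots> = c" by simp
    finally have "x = c" .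
    with e have "hcode xs = hcode b" by simp
    thus ?thesis using snoc.IH snoc \<open>x = c\<close> by simp
  qed
qed

fun val :: "(nat \<Rightarrow> nat) \<Rightarrow> nat \<Rightarrow> nat \<Rightarrow> nat" where
  "val \<sigma> s i = (if i \<le> 1 then s else \<sigma> (inp (val \<sigma> s (i div 2)) (odd i)))"

declare val.simps[simp del]

definition inn :: "(nat \<Rightarrow> nat) \<Rightarrow> nat \<Rightarrow> nat \<Rightarrow> nat" where
  "inn \<sigma> s i = inp (val \<sigma> s (i div 2)) (odd i)"

lemma val_le1: "i \<le> 1 \<Longrightarrow> val \<sigma> s i = s" by (simp add: val.simps)
lemma val_ge2: "2 \<le> i \<Longrightarrow> val \<sigma> s i = \<sigma> (inn \<sigma> s i)" by (simp add: val.simps inn_def)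

lemma wf_code: "wlk \<sigma> s a = val \<sigma> s (hcode a)"
proof (induction a rule: rev_induct)
  case Nil thus ?case by (simp add: val_le1)
next
  case (snoc c a)
  have c1: "1 \<le> hcode a" by (rule hcode_pos)
  have "(2 * hcode a + of_bool c) div 2 = hcode a" by simp
  moreover have "odd (2 * hcode a + of_bool c) = c" by simp
  ultimately show ?case using c1 snoc
    by (simp add: wf_snoc val_ge2 inn_def)
qed

lemma val_strs: "0 < n \<Longrightarrow> \<sigma> permutes strs n \<Longrightarrow> s \<in> strs n \<Longrightarrow> val \<sigma> s i \<in> strs n"
proof (induction i rule: less_induct)
  case (less i)
  show ?case
  proof (cases "i \<le> 1")
    case True thus ?thesis using less by (simp add: val_le1)
  next
    case False
    hence "val \<sigma> s (i div 2) \<in> strs n" using less by simp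
    thus ?thesis using False less.prems by (simp add: val_ge2 inn_def inp_strs permutes_in_image)
  qed
qed

lemma inn_strs: "0 < n \<Longrightarrow> \<sigma> permutes strs n \<Longrightarrow> s \<in> strs n \<Longrightarrow> inn \<sigma> s i \<in> strs n"
  by (simp add: inn_def inp_strs val_strs)

lemma val_agree:
  assumes ag: "\<And>i. 2 \<le> i \<Longrightarrow> i \<le> j \<Longrightarrow> \<sigma>' (inn \<sigma> s i) = \<sigma> (inn \<sigma> s i)"
  shows "i \<le> j \<Longrightarrow> val \<sigma>' s i = val \<sigma> s i"
proof (induction i rule: less_induct)
  case (less i)
  show ?case
  proof (cases "i \<le> 1")
    case True thus ?thesis by (simp add: val_le1)
  next
    case False
    hence ih: "val \<sigma>' s (i div 2) = val \<sigma> s (i div 2)" using less by simp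
    have "val \<sigma>' s i = \<sigma>' (inn \<sigma>' s i)" using False by (simp add: val_ge2)
    also have "inn \<sigma>' s i = inn \<sigma> s i" using ih by (simp add: inn_def)
    also have "\<sigma>' (inn \<sigma> s i) = \<sigma> (inn \<sigma> s i)" using ag False less.prems by simp
    also have "\<dots> = val \<sigma> s i" using False by (simp add: val_ge2)
    finally show ?thesis .
  qed
qed

definition fr :: "(nat \<Rightarrow> nat) \<Rightarrow> nat \<Rightarrow> nat \<Rightarrow> bool" where
  "fr \<sigma> s m \<longleftrightarrow> (\<forall>j. 1 \<le> j \<longrightarrow> j < m \<longrightarrow> val \<sigma> s m \<noteq> val \<sigma> s j \<and> val \<sigma> s m \<noteq> flip1 (val \<sigma> s j))"

definition gu :: "(nat \<Rightarrow> nat) \<Rightarrow> nat \<Rightarrow> nat \<Rightarrow> bool" where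
  "gu \<sigma> s m \<longleftrightarrow> (\<forall>i. 2 \<le> i \<longrightarrow> i < m \<longrightarrow> fr \<sigma> s i)"

lemma gu_distinct:
  assumes g: "gu \<sigma> s m" and i: "1 \<le> i" "i < m" and j: "1 \<le> j" "j < m" and ij: "i \<noteq> j"
  shows "val \<sigma> s i \<noteq> val \<sigma> s j \<and> val \<sigma> s i \<noteq> flip1 (val \<sigma> s j)"
proof (cases "j < i")
  case True
  thus ?thesis using g i j unfolding gu_def fr_def by auto
next
  case False
  hence "i < j" using ij by simp
  hence "val \<sigma> s j \<noteq> val \<sigma> s i \<and> val \<sigma> s j \<noteq> flip1 (val \<sigma> s i)"
    using g i j unfolding gu_def fr_def by auto
  thus ?thesis by (metis flip1_flip1)
qed

lemma inp_eq_cases: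
  assumes "inp x c = inp x' c'"
  shows "x = x' \<or> x = flip1 x'"
  using assms unfolding inp_def by (metis flip1_flip1)

lemma inn_distinct:
  assumes g: "gu \<sigma> s m" and j: "2 \<le> j" "j < m"
  shows "inn \<sigma> s m \<noteq> inn \<sigma> s j"
proof
  assume e: "inn \<sigma> s m = inn \<sigma> s j"
  let ?p = "m div 2" and ?q = "j div 2"
  have p: "1 \<le> ?p" "?p < m" using j by auto
  have q: "1 \<le> ?q" "?q < m" using j by auto
  show False
  proof (cases "?p = ?q")
    case True
    hence "inp (val \<sigma> s ?p) (odd m) = inp (val \<sigma> s ?p) (odd j)" using e by (simp add: inn_def)
    hence "odd m = odd j" by (auto simp: inp_def split: if_splits)
    with True have "m = j" by (metis div_mult_mod_eq odd_iff_mod_2_eq_one not_mod_2_eq_1_eq_0)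
    thus False using j by simp
  next
    case False
    have "val \<sigma> s ?p = val \<sigma> s ?q \<or> val \<sigma> s ?p = flip1 (val \<sigma> s ?q)"
      using e inp_eq_cases[of "val \<sigma> s ?p" "odd m" "val \<sigma> s ?q" "odd j"] by (simp add: inn_def)
    thus False using gu_distinct[OF g p q False] by simp
  qed
qed

lemma finite_perms[simp]: "finite (perms n)"
  unfolding perms_def by (rule finite_permutations) simp

lemma resample:
  assumes n: "0 < n" and sp: "\<sigma> permutes strs n" and s: "s \<in> strs n" and g: "gu \<sigma> s m" and m: "2 \<le> m"
    and w: "w \<in> strs n" "w \<notin> inn \<sigma> s ` {2..<m}"
  shows "(\<sigma> \<circ> Transposition.transpose (inn \<sigma> s m) w) permutes strs n
    \<and> (\<forall>i<m. val (\<sigma> \<circ> Transposition.transpose (inn \<sigma> s m) w) s i = val \<sigma> s i)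
    \<and> (\<forall>i. 2 \<le> i \<longrightarrow> i \<le> m \<longrightarrow> inn (\<sigma> \<circ> Transposition.transpose (inn \<sigma> s m) w) s i = inn \<sigma> s i)
    \<and> gu (\<sigma> \<circ> Transposition.transpose (inn \<sigma> s m) w) s m
    \<and> val (\<sigma> \<circ> Transposition.transpose (inn \<sigma> s m) w) s m = \<sigma> w"
proof -
  define v where "v = inn \<sigma> s m"
  define \<sigma>' where "\<sigma>' = \<sigma> \<circ> Transposition.transpose v w"
  have vs: "v \<in> strs n" unfolding v_def by (rule inn_strs[OF n sp s])
  have p: "\<sigma>' permutes strs n" unfolding \<sigma>'_def
    by (rule permutes_compose[OF permutes_swap_id[OF vs w(1)] sp])
  have ag: "\<sigma>' (inn \<sigma> s i) = \<sigma> (inn \<sigma> s i)" if "2 \<le> i" "i \<le> m - 1" for i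
  proof -
    have "i < m" using that m by linarith
    hence "inn \<sigma> s i \<noteq> v" unfolding v_def using inn_distinct[OF g, of i] that by auto
    moreover have "inn \<sigma> s i \<noteq> w" using w(2) that by auto
    ultimately show ?thesis by (simp add: \<sigma>'_def transpose_apply_other)
  qed
  have vals: "\<forall>i<m. val \<sigma>' s i = val \<sigma> s i"
    using val_agree[of "m - 1" \<sigma>' \<sigma> s] ag by auto
  have inns: "\<forall>i. 2 \<le> i \<longrightarrow> i \<le> m \<longrightarrow> inn \<sigma>' s i = inn \<sigma> s i"
    using vals by (auto simp: inn_def)
  have gu': "gu \<sigma>' s m" using g vals unfolding gu_def fr_def by auto
  have "val \<sigma>' s m = \<sigma>' (inn \<sigma>' s m)" using m by (simp add: val_ge2)
  also have "\<dots> = \<sigma> w" using inns m by (simp add: \<sigma>'_def v_def)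
  finally show ?thesis using p vals inns gu' unfolding \<sigma>'_def v_def by blast
qed

lemma count_bad:
  assumes n: "0 < n" and s: "s \<in> strs n" and m: "2 \<le> m"
  shows "real (card {\<sigma> \<in> perms n. gu \<sigma> s m \<and> \<not> fr \<sigma> s m}) * (2 ^ n - real m)
         \<le> 2 * real (m - 1) * real (card (perms n))"
proof -
  define G where "G = {\<sigma> \<in> perms n. gu \<sigma> s m}"
  define Bd where "Bd = {\<sigma> \<in> perms n. gu \<sigma> s m \<and> \<not> fr \<sigma> s m}"
  define I where "I \<sigma> = inn \<sigma> s ` {2..<m}" for \<sigma>
  define Pi where "Pi = Sigma G (\<lambda>\<sigma>. strs n - I \<sigma>)"
  define h where "h p = (fst p \<circ> Transposition.transpose (inn (fst p) s m) (snd p), snd p)" for p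
  define g where "g p = (if fr (fst p) s m then 0 else 1 :: real)" for p :: "(nat \<Rightarrow> nat) \<times> nat"
  have finG: "finite G" unfolding G_def by simp
  have finPi: "finite Pi" unfolding Pi_def using finG by (intro finite_SigmaI) auto
  have GP: "\<sigma> permutes strs n" if "\<sigma> \<in> G" for \<sigma> using that by (simp add: G_def perms_def)
  have hPi: "h p \<in> Pi \<and> h (h p) = p" if "p \<in> Pi" for p
  proof -
    obtain \<sigma> w where p: "p = (\<sigma>, w)" by (cases p)
    have sG: "\<sigma> \<in> G" and w: "w \<in> strs n" "w \<notin> I \<sigma>" using that p by (auto simp: Pi_def)
    note R = resample[OF n GP[OF sG] s _ m w(1), unfolded I_def[symmetric], OF _ w(2)]
    have gs: "gu \<sigma> s m" using sG by (simp add: G_def)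
    note R = R[OF gs]
    let ?s' = "\<sigma> \<circ> Transposition.transpose (inn \<sigma> s m) w"
    have I': "I ?s' = I \<sigma>" unfolding I_def using R by (intro image_cong) auto
    have "h p \<in> Pi" using R w I' by (simp add: h_def p Pi_def G_def perms_def)
    moreover have "h (h p) = p"
    proof -
      have "inn ?s' s m = inn \<sigma> s m" using R m by blast
      hence "h (h p) = (?s' \<circ> Transposition.transpose (inn \<sigma> s m) w, w)" by (simp add: h_def p)
      also have "?s' \<circ> Transposition.transpose (inn \<sigma> s m) w = \<sigma>" by (simp add: comp_assoc)
      finally show ?thesis by (simp add: p)
    qed
    ultimately show ?thesis by blast
  qed
  have eq: "(\<Sum>p\<in>Pi. g (h p)) = (\<Sum>p\<in>Pi. g p)"
    by (rule sum.reindex_bij_witness[where i = h and j = h]) (use hPi in auto)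
  have lhs: "(\<Sum>p\<in>Pi. g (h p)) \<le> (\<Sum>\<sigma>\<in>G. 2 * real (m - 1))"
  proof -
    have "(\<Sum>p\<in>Pi. g (h p)) = (\<Sum>\<sigma>\<in>G. \<Sum>w\<in>strs n - I \<sigma>. g (h (\<sigma>, w)))"
      unfolding Pi_def using finG by (subst sum.Sigma) auto
    also have "\<dots> \<le> (\<Sum>\<sigma>\<in>G. 2 * real (m - 1))"
    proof (rule sum_mono)
      fix \<sigma> assume sG: "\<sigma> \<in> G"
      have sp: "\<sigma> permutes strs n" by (rule GP[OF sG])
      have gs: "gu \<sigma> s m" using sG by (simp add: G_def)
      define F where "F = (\<lambda>j. val \<sigma> s j) ` {1..<m} \<union> (\<lambda>j. flip1 (val \<sigma> s j)) ` {1..<m}"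
      have cF: "card F \<le> 2 * (m - 1)"
      proof -
        have "card F \<le> card ((\<lambda>j. val \<sigma> s j) ` {1..<m}) + card ((\<lambda>j. flip1 (val \<sigma> s j)) ` {1..<m})"
          unfolding F_def by (rule card_Un_le)
        also have "\<dots> \<le> card {1..<m} + card {1..<m}" by (intro add_mono card_image_le) auto
        finally show ?thesis by simp
      qed
      have gle: "g (h (\<sigma>, w)) \<le> (if \<sigma> w \<in> F then 1 else 0)" if w: "w \<in> strs n - I \<sigma>" for w
      proof -
        note R = resample[OF n sp s gs m, of w] 
        have R: "val (\<sigma> \<circ> Transposition.transpose (inn \<sigma> s m) w) s m = \<sigma> w"
             "\<forall>i<m. val (\<sigma> \<circ> Transposition.transpose (inn \<sigma> s m) w) s i = val \<sigma> s i"
          using R w by (auto simp: I_def)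
        show ?thesis
          unfolding g_def h_def fr_def using R by (auto simp: F_def)
      qed
      have "(\<Sum>w\<in>strs n - I \<sigma>. g (h (\<sigma>, w))) \<le> (\<Sum>w\<in>strs n - I \<sigma>. if \<sigma> w \<in> F then 1 else 0)"
        by (rule sum_mono) (rule gle)
      also have "\<dots> = real (card {w \<in> strs n - I \<sigma>. \<sigma> w \<in> F})"
        by (simp add: sum.If_cases Int_def)
      also have "real (card {w \<in> strs n - I \<sigma>. \<sigma> w \<in> F}) \<le> real (card F)"
      proof -
        have "card {w \<in> strs n - I \<sigma>. \<sigma> w \<in> F} = card (\<sigma> ` {w \<in> strs n - I \<sigma>. \<sigma> w \<in> F})"
          using permutes_inj[OF sp] by (simp add: card_image inj_on_subset[of _ UNIV])
        also have "\<dots> \<le> card F" by (rule card_mono) (auto simp: F_def)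
        finally show ?thesis by simp
      qed
      also have "real (card F) \<le> 2 * real (m - 1)"
      proof -
        have "real (card F) \<le> real (2 * (m - 1))" using cF by (simp only: of_nat_le_iff)
        thus ?thesis by simp
      qed
      finally show "(\<Sum>w\<in>strs n - I \<sigma>. g (h (\<sigma>, w))) \<le> 2 * real (m - 1)" .
    qed
    finally show ?thesis .
  qed
  have rhs: "real (card Bd) * (2 ^ n - real m) \<le> (\<Sum>p\<in>Pi. g p)"
  proof -
    have "(\<Sum>p\<in>Pi. g p) = (\<Sum>\<sigma>\<in>G. \<Sum>w\<in>strs n - I \<sigma>. g (\<sigma>, w))"
      unfolding Pi_def using finG by (subst sum.Sigma) auto
    also have "\<dots> = (\<Sum>\<sigma>\<in>G. if fr \<sigma> s m then 0 else real (card (strs n - I \<sigma>)))"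
      by (intro sum.cong refl) (simp add: g_def)
    also have "\<dots> = (\<Sum>\<sigma>\<in>Bd. real (card (strs n - I \<sigma>)))"
      using finG by (simp add: sum.If_cases G_def Bd_def) (intro sum.cong refl; auto)
    also have "\<dots> \<ge> (\<Sum>\<sigma>\<in>Bd. 2 ^ n - real m)"
    proof (rule sum_mono)
      fix \<sigma>
      have fI: "finite (I \<sigma>)" unfolding I_def by simp
      have "card (strs n) \<le> card ((strs n - I \<sigma>) \<union> I \<sigma>)"
        by (rule card_mono) (use fI in auto)
      also have "\<dots> \<le> card (strs n - I \<sigma>) + card (I \<sigma>)" by (rule card_Un_le)
      finally have "card (strs n) \<le> card (strs n - I \<sigma>) + card (I \<sigma>)" .
      moreover have "card (I \<sigma>) \<le> m" unfolding I_def
        using card_image_le[of "{2..<m}" "inn \<sigma> s"] by simp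
      ultimately have "2 ^ n \<le> card (strs n - I \<sigma>) + m" by simp
      hence "real (2 ^ n) \<le> real (card (strs n - I \<sigma>) + m)" by (simp only: of_nat_le_iff)
      thus "2 ^ n - real m \<le> real (card (strs n - I \<sigma>))" by simp
    qed
    finally show ?thesis by simp
  qed
  have "card G \<le> card (perms n)" unfolding G_def by (rule card_mono) auto
  hence cG: "real (card G) \<le> real (card (perms n))" by (simp only: of_nat_le_iff)
  have "(\<Sum>\<sigma>\<in>G. 2 * real (m - 1)) \<le> 2 * real (m - 1) * real (card (perms n))"
    using mult_right_mono[OF cG, of "2 * real (m - 1)"] by (simp add: mult_ac)
  thus ?thesis using lhs rhs eq unfolding Bd_def by linarith
qed

definition PF :: "(nat \<Rightarrow> nat) \<Rightarrow> nat \<Rightarrow> nat \<Rightarrow> bool" where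
  "PF \<sigma> s d \<longleftrightarrow> inj_on (wlk \<sigma> s) {a. length a \<le> d}"

lemma notPF_bad:
  assumes "\<not> PF \<sigma> s d"
  shows "\<exists>m. 2 \<le> m \<and> m < 2 ^ (d + 1) \<and> gu \<sigma> s m \<and> \<not> fr \<sigma> s m"
proof -
  obtain a a' where aa: "length a \<le> d" "length a' \<le> d" "a \<noteq> a'" "wlk \<sigma> s a = wlk \<sigma> s a'"
    using assms unfolding PF_def inj_on_def by auto
  have c: "hcode a \<noteq> hcode a'" using aa(3) hcode_inj by metis
  have l: "hcode a < 2 ^ (d + 1)" "hcode a' < 2 ^ (d + 1)"
    using hcode_less[of a] hcode_less[of a'] aa(1,2)
    by (metis add_le_mono1 order_less_le_trans one_less_numeral_iff power_increasing_iff semiring_norm(76))+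
  have "\<not> gu \<sigma> s (2 ^ (d + 1))"
    using gu_distinct[of \<sigma> s "2 ^ (d+1)" "hcode a" "hcode a'"] hcode_pos[of a] hcode_pos[of a'] c l aa(4)
    by (auto simp: wf_code)
  then obtain i where i: "2 \<le> i" "i < 2 ^ (d + 1)" "\<not> fr \<sigma> s i" unfolding gu_def by auto
  hence "\<exists>i. 2 \<le> i \<and> i < 2 ^ (d + 1) \<and> \<not> fr \<sigma> s i" by blast
  then obtain m where m: "2 \<le> m \<and> m < 2 ^ (d + 1) \<and> \<not> fr \<sigma> s m"
      and least: "\<And>k. k < m \<Longrightarrow> \<not> (2 \<le> k \<and> k < 2 ^ (d + 1) \<and> \<not> fr \<sigma> s k)"
    using exists_least_iff[where P = "\<lambda>i. 2 \<le> i \<and> i < 2 ^ (d + 1) \<and> \<not> fr \<sigma> s i"] by blast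
  have "gu \<sigma> s m" unfolding gu_def using least m by force
  thus ?thesis using m by blast
qed

lemma PF_bound:
  assumes n: "0 < n" and s: "s \<in> strs n" and M: "2 ^ (d + 1) < (2::nat) ^ n"
  shows "real (card {\<sigma> \<in> perms n. \<not> PF \<sigma> s d})
         \<le> 2 * 4 ^ (d + 1) / (2 ^ n - 2 ^ (d + 1)) * real (card (perms n))"
proof -
  define M :: nat where "M = 2 ^ (d + 1)"
  define Bd where "Bd m = {\<sigma> \<in> perms n. gu \<sigma> s m \<and> \<not> fr \<sigma> s m}" for m
  have MN: "real M < 2 ^ n" using M unfolding M_def by (metis of_nat_less_iff of_nat_numeral of_nat_power)
  have sub: "{\<sigma> \<in> perms n. \<not> PF \<sigma> s d} \<subseteq> (\<Union>m\<in>{2..<M}. Bd m)"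
    using notPF_bad unfolding Bd_def M_def by fastforce
  have "card {\<sigma> \<in> perms n. \<not> PF \<sigma> s d} \<le> card (\<Union>m\<in>{2..<M}. Bd m)"
    by (rule card_mono[OF _ sub]) (auto simp: Bd_def)
  also have "\<dots> \<le> (\<Sum>m\<in>{2..<M}. card (Bd m))" by (rule card_UN_le) simp
  finally have "real (card {\<sigma> \<in> perms n. \<not> PF \<sigma> s d}) \<le> real (\<Sum>m\<in>{2..<M}. card (Bd m))"
    by (simp only: of_nat_le_iff)
  hence c1: "real (card {\<sigma> \<in> perms n. \<not> PF \<sigma> s d}) \<le> (\<Sum>m\<in>{2..<M}. real (card (Bd m)))"
    by (simp only: of_nat_sum)
  have each: "real (card (Bd m)) \<le> 2 * real M * real (card (perms n)) / (2 ^ n - real M)"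
    if m: "m \<in> {2..<M}" for m
  proof -
    have pos: "0 < 2 ^ n - real M" using MN by simp
    have "real (card (Bd m)) * (2 ^ n - real M) \<le> real (card (Bd m)) * (2 ^ n - real m)"
      using m by (intro mult_left_mono) auto
    also have "\<dots> \<le> 2 * real (m - 1) * real (card (perms n))"
      unfolding Bd_def by (rule count_bad[OF n s]) (use m in auto)
    also have "\<dots> \<le> 2 * real M * real (card (perms n))"
      using m by (intro mult_right_mono) auto
    finally show ?thesis using pos by (simp add: pos_le_divide_eq)
  qed
  have "(\<Sum>m\<in>{2..<M}. real (card (Bd m))) \<le> (\<Sum>m\<in>{2..<M}. 2 * real M * real (card (perms n)) / (2 ^ n - real M))"
    by (rule sum_mono) (rule each)
  also have "\<dots> = real (M - 2) * (2 * real M * real (card (perms n)) / (2 ^ n - real M))" by simp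
  also have "\<dots> \<le> real M * (2 * real M * real (card (perms n)) / (2 ^ n - real M))"
    using MN by (intro mult_right_mono) auto
  also have "\<dots> = 2 * (real M * real M) / (2 ^ n - real M) * real (card (perms n))" by simp
  also have "real M * real M = 4 ^ (d + 1)" unfolding M_def
    by (simp add: power_mult_distrib[symmetric])
  finally show ?thesis using c1 unfolding M_def by simp
qed



definition uu :: "(nat \<Rightarrow> nat) \<Rightarrow> bool list \<Rightarrow> nat" where
  "uu \<sigma> a = inp (wlk \<sigma> 0 (butlast a)) (last a)"

lemma wf_uu: "a \<noteq> [] \<Longrightarrow> wlk \<sigma> 0 a = \<sigma> (uu \<sigma> a)"
  by (metis append_butlast_last_id uu_def wf_snoc)

lemma zero_strs[simp]: "0 \<in> strs n" by (simp add: strs_def)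

lemma uu_strs: "0 < n \<Longrightarrow> \<sigma> permutes strs n \<Longrightarrow> uu \<sigma> a \<in> strs n"
  by (simp add: uu_def inp_strs wf_strs)

definition good :: "(nat \<Rightarrow> nat) \<Rightarrow> bool list \<Rightarrow> bool list \<Rightarrow> nat \<Rightarrow> bool" where
  "good \<sigma> a b r \<longleftrightarrow> (let u = uu \<sigma> a in
     u \<notin> set (ins \<sigma> 0 (butlast a)) \<and> r \<notin> set (ins \<sigma> 0 (butlast a)) \<and>
     u \<notin> set (ins \<sigma> (\<sigma> u) b) \<and> r \<notin> set (ins \<sigma> (\<sigma> u) b) \<and>
     u \<notin> set (ins \<sigma> (\<sigma> r) b) \<and> r \<notin> set (ins \<sigma> (\<sigma> r) b))"

lemma good_inv:
  assumes n: "0 < n" and sp: "\<sigma> permutes strs n" and r: "r \<in> strs n" and g: "good \<sigma> a b r"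
  defines "\<sigma>' \<equiv> \<sigma> \<circ> Transposition.transpose (uu \<sigma> a) r"
  shows "\<sigma>' permutes strs n \<and> uu \<sigma>' a = uu \<sigma> a \<and> good \<sigma>' a b r
     \<and> \<sigma>' \<circ> Transposition.transpose (uu \<sigma>' a) r = \<sigma>
     \<and> wlk \<sigma> (\<sigma> (uu \<sigma> a)) b = wlk \<sigma>' (\<sigma>' r) b"
proof -
  define u where "u = uu \<sigma> a"
  have us: "u \<in> strs n" unfolding u_def by (rule uu_strs[OF n sp])
  have p: "\<sigma>' permutes strs n" unfolding \<sigma>'_def u_def[symmetric]
    by (rule permutes_compose[OF permutes_swap_id[OF us r] sp])
  have oth: "\<sigma>' v = \<sigma> v" if "v \<noteq> u" "v \<noteq> r" for v
    using that by (simp add: \<sigma>'_def u_def[symmetric] transpose_apply_other)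
  have s'u: "\<sigma>' u = \<sigma> r" and s'r: "\<sigma>' r = \<sigma> u" by (simp_all add: \<sigma>'_def u_def[symmetric])
  have g': "u \<notin> set (ins \<sigma> 0 (butlast a))" "r \<notin> set (ins \<sigma> 0 (butlast a))"
     "u \<notin> set (ins \<sigma> (\<sigma> u) b)" "r \<notin> set (ins \<sigma> (\<sigma> u) b)"
     "u \<notin> set (ins \<sigma> (\<sigma> r) b)" "r \<notin> set (ins \<sigma> (\<sigma> r) b)"
    using g unfolding good_def u_def[symmetric] Let_def by auto
  have pre: "wlk \<sigma>' 0 (butlast a) = wlk \<sigma> 0 (butlast a) \<and> ins \<sigma>' 0 (butlast a) = ins \<sigma> 0 (butlast a)"
    by (rule agree_wf) (metis g'(1,2) oth)
  have uu': "uu \<sigma>' a = u" using pre by (simp add: uu_def u_def)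
  have suf1: "wlk \<sigma>' (\<sigma> u) b = wlk \<sigma> (\<sigma> u) b \<and> ins \<sigma>' (\<sigma> u) b = ins \<sigma> (\<sigma> u) b"
    by (rule agree_wf) (metis g'(3,4) oth)
  have suf2: "wlk \<sigma>' (\<sigma> r) b = wlk \<sigma> (\<sigma> r) b \<and> ins \<sigma>' (\<sigma> r) b = ins \<sigma> (\<sigma> r) b"
    by (rule agree_wf) (metis g'(5,6) oth)
  have good': "good \<sigma>' a b r"
    unfolding good_def Let_def uu' s'u s'r using pre suf1 suf2 g' by auto
  have inv: "\<sigma>' \<circ> Transposition.transpose (uu \<sigma>' a) r = \<sigma>"
    unfolding uu' by (simp add: \<sigma>'_def u_def[symmetric] comp_assoc)
  show ?thesis using p uu' good' inv suf1 s'r by (simp add: u_def)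
qed

definition FF :: "nat \<Rightarrow> nat \<Rightarrow> nat \<Rightarrow> (nat \<Rightarrow> nat \<Rightarrow> qmat) \<Rightarrow> (nat \<Rightarrow> nat \<Rightarrow> bool) \<Rightarrow> (nat \<Rightarrow> nat) \<Rightarrow> bool list \<Rightarrow> bool list \<Rightarrow> nat \<Rightarrow> real" where
  "FF n m T U ch \<sigma> a b r = (let y = wlk \<sigma> (\<sigma> r) b; u = uu \<sigma> a in
     4 * (\<Sum>t<T. sqrt (qq n m U ch \<sigma> y t u) + sqrt (qq n m U ch \<sigma> y t r)
                   + sqrt (qq n m U ch \<sigma> y t (\<sigma> u)) + sqrt (qq n m U ch \<sigma> y t (\<sigma> r))))"

lemma FF_nonneg: "0 \<le> FF n m T U ch \<sigma> a b r"
  unfolding FF_def Let_def by (intro mult_nonneg_nonneg sum_nonneg add_nonneg_nonneg) (auto simp: qq_nonneg)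

lemma A_bounds:
  assumes V: "valid_alg n m T U" and y: "y \<in> strs n" and s: "\<sigma> permutes strs n"
  shows "0 \<le> accept_prob n m T U ch Acc \<sigma> y \<and> accept_prob n m T U ch Acc \<sigma> y \<le> 1"
proof -
  have "accept_prob n m T U ch Acc \<sigma> y \<le> nrm2 (qbasis n m) (qstate n m U ch \<sigma> y T)"
    unfolding accept_prob_def nrm2_def by (rule sum_mono2) auto
  also have "\<dots> \<le> 1" by (rule state_nrm2[OF V y s order.refl])
  finally show ?thesis by (simp add: accept_prob_def sum_nonneg)
qed

lemma per_abr:
  assumes n: "0 < n" and V: "valid_alg n m T U" and r: "r \<in> strs n"
  shows "\<bar>(\<Sum>\<sigma>\<in>perms n. accept_prob n m T U ch Acc \<sigma> (wlk \<sigma> (\<sigma> (uu \<sigma> a)) b))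
         - (\<Sum>\<sigma>\<in>perms n. accept_prob n m T U ch Acc \<sigma> (wlk \<sigma> (\<sigma> r) b))\<bar>
     \<le> 2 * real (card {\<sigma> \<in> perms n. \<not> good \<sigma> a b r}) + (\<Sum>\<sigma>\<in>perms n. FF n m T U ch \<sigma> a b r)"
proof -
  let ?A = "accept_prob n m T U ch Acc"
  define Gs where "Gs = {\<sigma> \<in> perms n. good \<sigma> a b r}"
  define Bs where "Bs = {\<sigma> \<in> perms n. \<not> good \<sigma> a b r}"
  define Phi where "Phi \<sigma> = \<sigma> \<circ> Transposition.transpose (uu \<sigma> a) r" for \<sigma>
  define y1 where "y1 \<sigma> = wlk \<sigma> (\<sigma> (uu \<sigma> a)) b" for \<sigma>
  define y2 where "y2 \<sigma> = wlk \<sigma> (\<sigma> r) b" for \<sigma>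
  have PP: "\<sigma> permutes strs n" if "\<sigma> \<in> perms n" for \<sigma> using that by (simp add: perms_def)
  have y1s: "y1 \<sigma> \<in> strs n" if "\<sigma> \<in> perms n" for \<sigma>
    unfolding y1_def using PP[OF that] n by (intro wf_strs) (auto simp: permutes_in_image uu_strs)
  have y2s: "y2 \<sigma> \<in> strs n" if "\<sigma> \<in> perms n" for \<sigma>
    unfolding y2_def using PP[OF that] n r by (intro wf_strs) (auto simp: permutes_in_image)
  have GI: "Phi \<sigma> \<in> Gs \<and> Phi (Phi \<sigma>) = \<sigma> \<and> y1 \<sigma> = y2 (Phi \<sigma>) \<and> uu (Phi \<sigma>) a = uu \<sigma> a" if "\<sigma> \<in> Gs" for \<sigma>
  proof -
    have sp: "\<sigma> permutes strs n" and g: "good \<sigma> a b r" using that PP by (auto simp: Gs_def)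
    note R = good_inv[OF n sp r g]
    show ?thesis using R unfolding Phi_def Gs_def perms_def y1_def y2_def by auto
  qed
  have fin: "finite Gs" "finite Bs" by (simp_all add: Gs_def Bs_def)
  have split: "(\<Sum>\<sigma>\<in>perms n. f \<sigma>) = (\<Sum>\<sigma>\<in>Gs. f \<sigma>) + (\<Sum>\<sigma>\<in>Bs. f \<sigma>)" for f :: "_ \<Rightarrow> real"
  proof -
    have "perms n = Gs \<union> Bs" "Gs \<inter> Bs = {}" by (auto simp: Gs_def Bs_def)
    thus ?thesis using fin by (simp add: sum.union_disjoint)
  qed
  have e1: "(\<Sum>\<sigma>\<in>Gs. ?A (Phi \<sigma>) (y1 \<sigma>)) = (\<Sum>\<sigma>\<in>Gs. ?A \<sigma> (y2 \<sigma>))"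
  proof -
    have "(\<Sum>\<sigma>\<in>Gs. ?A (Phi \<sigma>) (y1 \<sigma>)) = (\<Sum>\<sigma>\<in>Gs. ?A (Phi \<sigma>) (y2 (Phi \<sigma>)))"
      using GI by (intro sum.cong refl) auto
    also have "\<dots> = (\<Sum>\<sigma>\<in>Gs. ?A \<sigma> (y2 \<sigma>))"
      by (rule sum.reindex_bij_witness[where i = Phi and j = Phi]) (use GI in auto)
    finally show ?thesis .
  qed
  have e2: "\<bar>?A \<sigma> (y1 \<sigma>) - ?A (Phi \<sigma>) (y1 \<sigma>)\<bar> \<le> FF n m T U ch (Phi \<sigma>) a b r" if "\<sigma> \<in> Gs" for \<sigma>
  proof -
    define \<tau> where "\<tau> = Phi \<sigma>"
    have tG: "\<tau> \<in> Gs" and st: "Phi \<tau> = \<sigma>" and yy: "y1 \<sigma> = y2 \<tau>" using GI[OF that] by (auto simp: \<tau>_def)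
    have tp: "\<tau> permutes strs n" using tG PP by (auto simp: Gs_def)
    have "\<bar>?A (\<tau> \<circ> Transposition.transpose (uu \<tau> a) r) (y2 \<tau>) - ?A \<tau> (y2 \<tau>)\<bar> \<le> FF n m T U ch \<tau> a b r"
      unfolding FF_def Let_def y2_def
      by (rule swap_bound[OF V _ tp uu_strs[OF n tp] r]) (use y2s tG in \<open>auto simp: Gs_def y2_def\<close>)
    thus ?thesis using st yy unfolding Phi_def \<tau>_def by simp
  qed
  have e3: "(\<Sum>\<sigma>\<in>Gs. FF n m T U ch (Phi \<sigma>) a b r) = (\<Sum>\<sigma>\<in>Gs. FF n m T U ch \<sigma> a b r)"
    by (rule sum.reindex_bij_witness[where i = Phi and j = Phi]) (use GI in auto)
  have e4: "(\<Sum>\<sigma>\<in>Gs. FF n m T U ch \<sigma> a b r) \<le> (\<Sum>\<sigma>\<in>perms n. FF n m T U ch \<sigma> a b r)"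
    by (rule sum_mono2) (auto simp: Gs_def FF_nonneg)
  have dG: "\<bar>(\<Sum>\<sigma>\<in>Gs. ?A \<sigma> (y1 \<sigma>)) - (\<Sum>\<sigma>\<in>Gs. ?A \<sigma> (y2 \<sigma>))\<bar> \<le> (\<Sum>\<sigma>\<in>perms n. FF n m T U ch \<sigma> a b r)"
  proof -
    have "\<bar>(\<Sum>\<sigma>\<in>Gs. ?A \<sigma> (y1 \<sigma>)) - (\<Sum>\<sigma>\<in>Gs. ?A \<sigma> (y2 \<sigma>))\<bar>
        = \<bar>\<Sum>\<sigma>\<in>Gs. ?A \<sigma> (y1 \<sigma>) - ?A (Phi \<sigma>) (y1 \<sigma>)\<bar>"
      using e1 by (simp add: sum_subtractf)
    also have "\<dots> \<le> (\<Sum>\<sigma>\<in>Gs. \<bar>?A \<sigma> (y1 \<sigma>) - ?A (Phi \<sigma>) (y1 \<sigma>)\<bar>)" by (rule sum_abs)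
    also have "\<dots> \<le> (\<Sum>\<sigma>\<in>Gs. FF n m T U ch (Phi \<sigma>) a b r)" by (rule sum_mono) (rule e2)
    finally show ?thesis using e3 e4 by linarith
  qed
  have dB: "\<bar>\<Sum>\<sigma>\<in>Bs. ?A \<sigma> (yy \<sigma>)\<bar> \<le> real (card Bs)" if "\<And>\<sigma>. \<sigma> \<in> perms n \<Longrightarrow> yy \<sigma> \<in> strs n" for yy
  proof -
    have "\<bar>\<Sum>\<sigma>\<in>Bs. ?A \<sigma> (yy \<sigma>)\<bar> \<le> (\<Sum>\<sigma>\<in>Bs. \<bar>?A \<sigma> (yy \<sigma>)\<bar>)" by (rule sum_abs)
    also have "\<dots> \<le> (\<Sum>\<sigma>\<in>Bs. 1)"
      by (rule sum_mono) (use A_bounds[OF V that PP] in \<open>auto simp: Bs_def\<close>)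
    finally show ?thesis by simp
  qed
  have "\<bar>(\<Sum>\<sigma>\<in>perms n. ?A \<sigma> (y1 \<sigma>)) - (\<Sum>\<sigma>\<in>perms n. ?A \<sigma> (y2 \<sigma>))\<bar>
      \<le> \<bar>(\<Sum>\<sigma>\<in>Gs. ?A \<sigma> (y1 \<sigma>)) - (\<Sum>\<sigma>\<in>Gs. ?A \<sigma> (y2 \<sigma>))\<bar>
        + \<bar>\<Sum>\<sigma>\<in>Bs. ?A \<sigma> (y1 \<sigma>)\<bar> + \<bar>\<Sum>\<sigma>\<in>Bs. ?A \<sigma> (y2 \<sigma>)\<bar>"
    unfolding split[of "\<lambda>\<sigma>. ?A \<sigma> (y1 \<sigma>)"] split[of "\<lambda>\<sigma>. ?A \<sigma> (y2 \<sigma>)"] by linarith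
  also have "\<dots> \<le> (\<Sum>\<sigma>\<in>perms n. FF n m T U ch \<sigma> a b r) + real (card Bs) + real (card Bs)"
    using dG dB[of y1] dB[of y2] y1s y2s by (meson add_mono)
  finally show ?thesis unfolding y1_def y2_def Bs_def by simp
qed

lemma PF_mono: "PF \<sigma> s d \<Longrightarrow> d' \<le> d \<Longrightarrow> PF \<sigma> s d'"
  unfolding PF_def by (rule inj_on_subset) auto

lemma PF_distinct:
  assumes pf: "PF \<sigma> x d" and l: "length bs \<le> d"
  shows "distinct (ins \<sigma> x bs)"
proof (rule ccontr)
  assume "\<not> distinct (ins \<sigma> x bs)"
  then obtain i j where ij: "i < length bs" "j < length bs" "i \<noteq> j" "ins \<sigma> x bs ! i = ins \<sigma> x bs ! j"
    by (auto simp: distinct_conv_nth)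
  have "wlk \<sigma> x (take (Suc i) bs) = wlk \<sigma> x (take (Suc j) bs)"
    using ij by (simp add: wf_take_Suc)
  moreover have "take (Suc i) bs \<noteq> take (Suc j) bs"
    using ij by (metis Suc_leI length_take min.absorb2 nat.inject)
  ultimately show False using pf l unfolding PF_def inj_on_def by auto
qed

lemma PF_start:
  assumes pf: "PF \<sigma> (\<sigma> r) d" and l: "length b \<le> d"
  shows "r \<notin> set (ins \<sigma> (\<sigma> r) b)"
proof
  assume "r \<in> set (ins \<sigma> (\<sigma> r) b)"
  then obtain j where j: "j < length b" "ins \<sigma> (\<sigma> r) b ! j = r" by (auto simp: in_set_conv_nth)
  have "wlk \<sigma> (\<sigma> r) (take (Suc j) b) = wlk \<sigma> (\<sigma> r) []" using j by (simp add: wf_take_Suc)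
  moreover have "take (Suc j) b \<noteq> []" using j by (cases b) auto
  moreover have m1: "take (Suc j) b \<in> {a. length a \<le> d}" using l by simp
  moreover have m2: "[] \<in> {a. length a \<le> d}" by simp
  ultimately show False using inj_onD[OF pf[unfolded PF_def]] by blast
qed

lemma ins_full: "a \<noteq> [] \<Longrightarrow> ins \<sigma> 0 (a @ b) = ins \<sigma> 0 (butlast a) @ [uu \<sigma> a] @ ins \<sigma> (\<sigma> (uu \<sigma> a)) b"
proof -
  assume a: "a \<noteq> []"
  have "ins \<sigma> 0 (a @ b) = ins \<sigma> 0 a @ ins \<sigma> (wlk \<sigma> 0 a) b" by (rule ins_append)
  also have "ins \<sigma> 0 a = ins \<sigma> 0 (butlast a @ [last a])" using a by simp
  also have "\<dots> = ins \<sigma> 0 (butlast a) @ [uu \<sigma> a]" by (simp add: ins_append uu_def)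
  finally show ?thesis using wf_uu[OF a] by simp
qed

lemma good_suff:
  assumes a: "a \<noteq> []" and l: "length a + length b \<le> L"
    and p1: "PF \<sigma> 0 L" and p2: "PF \<sigma> (\<sigma> r) (length b)"
    and c1: "r \<notin> set (ins \<sigma> 0 (butlast a))" and c2: "r \<notin> set (ins \<sigma> (\<sigma> (uu \<sigma> a)) b)"
    and c3: "uu \<sigma> a \<notin> set (ins \<sigma> (\<sigma> r) b)"
  shows "good \<sigma> a b r"
proof -
  have "distinct (ins \<sigma> 0 (a @ b))" by (rule PF_distinct[OF p1]) (use l in simp)
  hence d: "uu \<sigma> a \<notin> set (ins \<sigma> 0 (butlast a))" "uu \<sigma> a \<notin> set (ins \<sigma> (\<sigma> (uu \<sigma> a)) b)"
    unfolding ins_full[OF a] by auto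
  have "r \<notin> set (ins \<sigma> (\<sigma> r) b)" by (rule PF_start[OF p2]) simp
  thus ?thesis unfolding good_def Let_def using d c1 c2 c3 by auto
qed

lemma card_in_list: "card {r \<in> S. r \<in> set xs} \<le> length xs"
  by (metis (no_types, lifting) card_length card_mono List.finite_set mem_Collect_eq order_trans subsetI)

lemma card_hit:
  assumes n: "0 < n" and sp: "\<sigma> permutes strs n"
  shows "card {r \<in> strs n. u \<in> set (ins \<sigma> (\<sigma> r) b)} \<le> length b"
proof -
  have sub: "{r \<in> strs n. u \<in> set (ins \<sigma> (\<sigma> r) b)} \<subseteq> (\<Union>j<length b. {r \<in> strs n. ins \<sigma> (\<sigma> r) b ! j = u})"
    by (auto simp: in_set_conv_nth)
  have one: "card {r \<in> strs n. ins \<sigma> (\<sigma> r) b ! j = u} \<le> 1" if j: "j < length b" for j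
  proof -
    have inj: "inj_on (\<lambda>r. ins \<sigma> (\<sigma> r) b ! j) (strs n)"
    proof (rule inj_onI)
      fix r r' assume rr: "r \<in> strs n" "r' \<in> strs n" "ins \<sigma> (\<sigma> r) b ! j = ins \<sigma> (\<sigma> r') b ! j"
      hence "wlk \<sigma> (\<sigma> r) (take j b) = wlk \<sigma> (\<sigma> r') (take j b)"
        using j by (simp add: ins_nth inp_inj)
      hence "\<sigma> r = \<sigma> r'" using wf_inj[OF sp n, of "take j b"] rr sp
        by (auto simp: permutes_in_image dest: inj_onD)
      thus "r = r'" using permutes_inj[OF sp] by (auto dest: injD)
    qed
    have "card {r \<in> strs n. ins \<sigma> (\<sigma> r) b ! j = u} \<le> Suc 0"
      using inj by (subst card_le_Suc0_iff_eq) (auto dest: inj_onD)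
    thus ?thesis by simp
  qed
  have "card {r \<in> strs n. u \<in> set (ins \<sigma> (\<sigma> r) b)} \<le> card (\<Union>j<length b. {r \<in> strs n. ins \<sigma> (\<sigma> r) b ! j = u})"
    by (rule card_mono[OF _ sub]) auto
  also have "\<dots> \<le> (\<Sum>j<length b. card {r \<in> strs n. ins \<sigma> (\<sigma> r) b ! j = u})" by (rule card_UN_le) simp
  also have "\<dots> \<le> (\<Sum>j<length b. 1)" by (rule sum_mono) (rule one, simp)
  finally show ?thesis by simp
qed

definition beta :: "nat \<Rightarrow> nat \<Rightarrow> real" where
  "beta n d = 2 * 4 ^ (d + 1) / (2 ^ n - 2 ^ (d + 1))"

lemma cnt: "finite A \<Longrightarrow> real (card {x \<in> A. P x}) = (\<Sum>x\<in>A. if P x then 1 else 0)"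
proof -
  assume "finite A"
  have "(\<Sum>x\<in>A. if P x then 1 else (0::real)) = (\<Sum>x\<in>{x \<in> A. P x}. 1)"
    using \<open>finite A\<close> by (simp add: sum.If_cases Int_def conj_commute)
  thus ?thesis by simp
qed

lemma perms_bij: "\<sigma> \<in> perms n \<Longrightarrow> bij_betw \<sigma> (strs n) (strs n)"
  by (simp add: perms_def permutes_imp_bij)

lemma sum_PF_shift:
  assumes n: "0 < n" and M: "2 ^ (L + 1) < (2::nat) ^ n"
  shows "(\<Sum>\<sigma>\<in>perms n. \<Sum>r\<in>strs n. if \<not> PF \<sigma> (\<sigma> r) L then 1 else 0) \<le> 2 ^ n * beta n L * real (card (perms n))"
proof -
  have "(\<Sum>\<sigma>\<in>perms n. \<Sum>r\<in>strs n. if \<not> PF \<sigma> (\<sigma> r) L then 1 else (0::real))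
      = (\<Sum>\<sigma>\<in>perms n. \<Sum>x\<in>strs n. if \<not> PF \<sigma> x L then 1 else 0)"
  proof (rule sum.cong[OF refl])
    fix \<sigma> assume "\<sigma> \<in> perms n"
    show "(\<Sum>r\<in>strs n. if \<not> PF \<sigma> (\<sigma> r) L then 1 else (0::real)) = (\<Sum>x\<in>strs n. if \<not> PF \<sigma> x L then 1 else 0)"
      using sum.reindex_bij_betw[OF perms_bij[OF \<open>\<sigma> \<in> perms n\<close>], of "\<lambda>x. if \<not> PF \<sigma> x L then 1 else (0::real)"]
      by simp
  qed
  also have "\<dots> = (\<Sum>x\<in>strs n. \<Sum>\<sigma>\<in>perms n. if \<not> PF \<sigma> x L then 1 else 0)" by (rule sum.swap)
  also have "\<dots> = (\<Sum>x\<in>strs n. real (card {\<sigma> \<in> perms n. \<not> PF \<sigma> x L}))" by (simp add: cnt)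
  also have "\<dots> \<le> (\<Sum>x\<in>strs n. beta n L * real (card (perms n)))"
    by (rule sum_mono) (use PF_bound[OF n _ M] in \<open>simp add: beta_def\<close>)
  finally show ?thesis by simp
qed

lemma bad_total:
  assumes n: "0 < n" and a: "a \<noteq> []" and l: "length a + length b \<le> L" and M: "2 ^ (L + 1) < (2::nat) ^ n"
  shows "(\<Sum>r\<in>strs n. real (card {\<sigma> \<in> perms n. \<not> good \<sigma> a b r}))
     \<le> real (card (perms n)) * (2 * 2 ^ n * beta n L + 3 * real L)"
proof -
  let ?P = "perms n" and ?R = "strs n"
  define X1 where "X1 \<sigma> = (if \<not> PF \<sigma> 0 L then 1 else (0::real))" for \<sigma>
  define X2 where "X2 \<sigma> r = (if \<not> PF \<sigma> (\<sigma> r) L then 1 else (0::real))" for \<sigma> r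
  define X3 where "X3 \<sigma> r = (if r \<in> set (ins \<sigma> 0 (butlast a)) then 1 else (0::real))" for \<sigma> r
  define X4 where "X4 \<sigma> r = (if r \<in> set (ins \<sigma> (\<sigma> (uu \<sigma> a)) b) then 1 else (0::real))" for \<sigma> r
  define X5 where "X5 \<sigma> r = (if uu \<sigma> a \<in> set (ins \<sigma> (\<sigma> r) b) then 1 else (0::real))" for \<sigma> r
  have ind: "(if \<not> good \<sigma> a b r then 1 else (0::real)) \<le> X1 \<sigma> + X2 \<sigma> r + X3 \<sigma> r + X4 \<sigma> r + X5 \<sigma> r" for \<sigma> r
  proof -
    have "good \<sigma> a b r" if "PF \<sigma> 0 L" "PF \<sigma> (\<sigma> r) L" "r \<notin> set (ins \<sigma> 0 (butlast a))"
       "r \<notin> set (ins \<sigma> (\<sigma> (uu \<sigma> a)) b)" "uu \<sigma> a \<notin> set (ins \<sigma> (\<sigma> r) b)"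
      using good_suff[OF a l that(1) PF_mono[OF that(2)] that(3-5)] l by simp
    thus ?thesis unfolding X1_def X2_def X3_def X4_def X5_def by auto
  qed
  have "(\<Sum>r\<in>?R. real (card {\<sigma> \<in> ?P. \<not> good \<sigma> a b r})) = (\<Sum>r\<in>?R. \<Sum>\<sigma>\<in>?P. if \<not> good \<sigma> a b r then 1 else 0)"
    by (simp add: cnt)
  also have "\<dots> = (\<Sum>\<sigma>\<in>?P. \<Sum>r\<in>?R. if \<not> good \<sigma> a b r then 1 else 0)" by (rule sum.swap)
  also have "\<dots> \<le> (\<Sum>\<sigma>\<in>?P. \<Sum>r\<in>?R. X1 \<sigma> + X2 \<sigma> r + X3 \<sigma> r + X4 \<sigma> r + X5 \<sigma> r)"
    by (intro sum_mono ind)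
  also have "\<dots> = (\<Sum>\<sigma>\<in>?P. 2 ^ n * X1 \<sigma>) + (\<Sum>\<sigma>\<in>?P. \<Sum>r\<in>?R. X2 \<sigma> r)
      + (\<Sum>\<sigma>\<in>?P. (\<Sum>r\<in>?R. X3 \<sigma> r) + (\<Sum>r\<in>?R. X4 \<sigma> r) + (\<Sum>r\<in>?R. X5 \<sigma> r))"
    by (simp add: sum.distrib)
  also have "(\<Sum>\<sigma>\<in>?P. 2 ^ n * X1 \<sigma>) \<le> 2 ^ n * beta n L * real (card ?P)"
  proof -
    have "(\<Sum>\<sigma>\<in>?P. X1 \<sigma>) = real (card {\<sigma> \<in> ?P. \<not> PF \<sigma> 0 L})" by (simp add: cnt X1_def)
    also have "\<dots> \<le> beta n L * real (card ?P)" using PF_bound[OF n zero_strs M] by (simp add: beta_def)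
    finally show ?thesis by (simp add: sum_distrib_left[symmetric] mult.assoc)
  qed
  also have "(\<Sum>\<sigma>\<in>?P. \<Sum>r\<in>?R. X2 \<sigma> r) \<le> 2 ^ n * beta n L * real (card ?P)"
    unfolding X2_def by (rule sum_PF_shift[OF n M])
  also have "(\<Sum>\<sigma>\<in>?P. (\<Sum>r\<in>?R. X3 \<sigma> r) + (\<Sum>r\<in>?R. X4 \<sigma> r) + (\<Sum>r\<in>?R. X5 \<sigma> r)) \<le> (\<Sum>\<sigma>\<in>?P. 3 * real L)"
  proof (rule sum_mono)
    fix \<sigma> assume sP: "\<sigma> \<in> ?P"
    have sp: "\<sigma> permutes strs n" using sP by (simp add: perms_def)
    have "(\<Sum>r\<in>?R. X3 \<sigma> r) = real (card {r \<in> ?R. r \<in> set (ins \<sigma> 0 (butlast a))})" by (simp add: cnt X3_def)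
    also have "\<dots> \<le> real L" using card_in_list[of ?R "ins \<sigma> 0 (butlast a)"] l by simp
    finally have 3: "(\<Sum>r\<in>?R. X3 \<sigma> r) \<le> real L" .
    have "(\<Sum>r\<in>?R. X4 \<sigma> r) = real (card {r \<in> ?R. r \<in> set (ins \<sigma> (\<sigma> (uu \<sigma> a)) b)})" by (simp add: cnt X4_def)
    also have "\<dots> \<le> real L" using card_in_list[of ?R "ins \<sigma> (\<sigma> (uu \<sigma> a)) b"] l by simp
    finally have 4: "(\<Sum>r\<in>?R. X4 \<sigma> r) \<le> real L" .
    have "(\<Sum>r\<in>?R. X5 \<sigma> r) = real (card {r \<in> ?R. uu \<sigma> a \<in> set (ins \<sigma> (\<sigma> r) b)})" by (simp add: cnt X5_def)
    also have "\<dots> \<le> real L" using card_hit[OF n sp, of "uu \<sigma> a" b] l by simp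
    finally have 5: "(\<Sum>r\<in>?R. X5 \<sigma> r) \<le> real L" .
    show "(\<Sum>r\<in>?R. X3 \<sigma> r) + (\<Sum>r\<in>?R. X4 \<sigma> r) + (\<Sum>r\<in>?R. X5 \<sigma> r) \<le> 3 * real L" using 3 4 5 by simp
  qed
  finally show ?thesis by (simp add: algebra_simps)
qed

lemma card_bl: "card {xs :: bool list. length xs = k} = 2 ^ k"
  using card_lists_length_eq[of "UNIV :: bool set" k] by simp

lemma finite_bl[simp]: "finite {xs :: bool list. length xs = k}"
  by (rule finite_list_length)

lemma W_u:
  assumes n: "0 < n" and V: "valid_alg n m T U" and y: "y \<in> strs n" and sP: "\<sigma> \<in> perms n" and t: "t \<le> T"
    and k: "1 \<le> k" "k \<le> L" and h: "h = uu \<sigma> \<or> h = (\<lambda>a. \<sigma> (uu \<sigma> a))"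
  shows "(\<Sum>a\<in>{a. length a = k}. qq n m U ch \<sigma> y t (h a)) \<le> 1 + 2 ^ k * (if \<not> PF \<sigma> 0 L then 1 else 0)"
proof -
  have sp: "\<sigma> permutes strs n" using sP by (simp add: perms_def)
  have hs: "h a \<in> strs n" for a using h uu_strs[OF n sp] sp by (auto simp: permutes_in_image)
  show ?thesis
  proof (cases "PF \<sigma> 0 L")
    case True
    have inj: "inj_on h {a. length a = k}"
    proof (rule inj_onI)
      fix a a' assume aa: "a \<in> {a. length a = k}" "a' \<in> {a. length a = k}" "h a = h a'"
      have ne: "a \<noteq> []" "a' \<noteq> []" using aa k by auto
      have "\<sigma> (uu \<sigma> a) = \<sigma> (uu \<sigma> a')" using h aa(3) by auto
      hence "wlk \<sigma> 0 a = wlk \<sigma> 0 a'" using wf_uu ne by simp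
      thus "a = a'" using True aa k unfolding PF_def by (auto dest: inj_onD)
    qed
    have "(\<Sum>a\<in>{a. length a = k}. qq n m U ch \<sigma> y t (h a)) = (\<Sum>x\<in>h ` {a. length a = k}. qq n m U ch \<sigma> y t x)"
      by (simp add: sum.reindex[OF inj])
    also have "\<dots> \<le> (\<Sum>x\<in>strs n. qq n m U ch \<sigma> y t x)"
      by (rule sum_mono2) (auto simp: hs qq_nonneg)
    also have "\<dots> \<le> 1" by (rule qq_sum[OF V y sp t])
    finally show ?thesis using True by simp
  next
    case False
    have "(\<Sum>a\<in>{a. length a = k}. qq n m U ch \<sigma> y t (h a)) \<le> (\<Sum>a\<in>{a::bool list. length a = k}. 1)"
      by (rule sum_mono) (rule qq_le1[OF V y sp t hs])
    also have "\<dots> = 2 ^ k" by (simp add: card_bl)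
    finally show ?thesis using False by simp
  qed
qed

lemma W_r:
  assumes n: "0 < n" and V: "valid_alg n m T U" and sP: "\<sigma> \<in> perms n" and t: "t \<le> T"
    and K: "K \<le> L" and h: "bij_betw h (strs n) (strs n)"
  shows "(\<Sum>r\<in>strs n. \<Sum>b\<in>{b. length b = K}. qq n m U ch \<sigma> (wlk \<sigma> (\<sigma> r) b) t (h r))
     \<le> 2 ^ n + 2 ^ K * (\<Sum>r\<in>strs n. if \<not> PF \<sigma> (\<sigma> r) L then 1 else 0)"
proof -
  have sp: "\<sigma> permutes strs n" using sP by (simp add: perms_def)
  have hs: "r \<in> strs n \<Longrightarrow> h r \<in> strs n" for r using h by (auto dest: bij_betwE)
  have inner: "(\<Sum>b\<in>{b. length b = K}. qq n m U ch \<sigma> (wlk \<sigma> (\<sigma> r) b) t (h r))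
      \<le> (\<Sum>y\<in>strs n. qq n m U ch \<sigma> y t (h r)) + 2 ^ K * (if \<not> PF \<sigma> (\<sigma> r) L then 1 else 0)"
    if r: "r \<in> strs n" for r
  proof (cases "PF \<sigma> (\<sigma> r) L")
    case True
    have "{b. length b = K} \<subseteq> {a. length a \<le> L}" using K by auto
    hence inj: "inj_on (wlk \<sigma> (\<sigma> r)) {b. length b = K}"
      using True unfolding PF_def by (metis inj_on_subset)
    have ys: "wlk \<sigma> (\<sigma> r) b \<in> strs n" for b using r sp n by (intro wf_strs) (auto simp: permutes_in_image)
    have "(\<Sum>b\<in>{b. length b = K}. qq n m U ch \<sigma> (wlk \<sigma> (\<sigma> r) b) t (h r))
        = (\<Sum>y\<in>wlk \<sigma> (\<sigma> r) ` {b. length b = K}. qq n m U ch \<sigma> y t (h r))"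
      by (simp add: sum.reindex[OF inj])
    also have "\<dots> \<le> (\<Sum>y\<in>strs n. qq n m U ch \<sigma> y t (h r))"
      by (rule sum_mono2) (auto simp: ys qq_nonneg)
    finally show ?thesis using True by simp
  next
    case False
    have ys: "wlk \<sigma> (\<sigma> r) b \<in> strs n" for b using r sp n by (intro wf_strs) (auto simp: permutes_in_image)
    have "(\<Sum>b\<in>{b. length b = K}. qq n m U ch \<sigma> (wlk \<sigma> (\<sigma> r) b) t (h r)) \<le> (\<Sum>b\<in>{b::bool list. length b = K}. 1)"
      by (rule sum_mono) (rule qq_le1[OF V ys sp t hs[OF r]])
    also have "\<dots> = 2 ^ K" by (simp add: card_bl)
    moreover have "0 \<le> (\<Sum>y\<in>strs n. qq n m U ch \<sigma> y t (h r))" by (simp add: sum_nonneg qq_nonneg)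
    ultimately show ?thesis using False by simp
  qed
  have "(\<Sum>r\<in>strs n. \<Sum>b\<in>{b. length b = K}. qq n m U ch \<sigma> (wlk \<sigma> (\<sigma> r) b) t (h r))
      \<le> (\<Sum>r\<in>strs n. (\<Sum>y\<in>strs n. qq n m U ch \<sigma> y t (h r)) + 2 ^ K * (if \<not> PF \<sigma> (\<sigma> r) L then 1 else 0))"
    by (rule sum_mono) (rule inner)
  also have "\<dots> = (\<Sum>y\<in>strs n. \<Sum>r\<in>strs n. qq n m U ch \<sigma> y t (h r)) + 2 ^ K * (\<Sum>r\<in>strs n. if \<not> PF \<sigma> (\<sigma> r) L then 1 else 0)"
    unfolding sum.distrib sum_distrib_left[symmetric] by (subst sum.swap) (rule refl)
  also have "(\<Sum>y\<in>strs n. \<Sum>r\<in>strs n. qq n m U ch \<sigma> y t (h r)) \<le> (\<Sum>y\<in>strs n. 1)"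
  proof (rule sum_mono)
    fix y assume y: "y \<in> strs n"
    have "(\<Sum>r\<in>strs n. qq n m U ch \<sigma> y t (h r)) = (\<Sum>x\<in>strs n. qq n m U ch \<sigma> y t x)"
      using sum.reindex_bij_betw[OF h] by simp
    also have "\<dots> \<le> 1" by (rule qq_sum[OF V y sp t])
    finally show "(\<Sum>r\<in>strs n. qq n m U ch \<sigma> y t (h r)) \<le> 1" .
  qed
  finally show ?thesis by simp
qed

lemma sum4_flat:
  "(\<Sum>a\<in>A. \<Sum>b\<in>B. \<Sum>c\<in>C. \<Sum>d\<in>D. g a b c d) = (\<Sum>x\<in>A \<times> B \<times> C \<times> D. g (fst x) (fst (snd x)) (fst (snd (snd x))) (snd (snd (snd x))))"
  by (simp add: sum.cartesian_product split_def)

lemma sum4_rev: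
  "(\<Sum>a\<in>A. \<Sum>b\<in>B. \<Sum>c\<in>C. \<Sum>d\<in>D. g a b c d) = (\<Sum>d\<in>D. \<Sum>c\<in>C. \<Sum>b\<in>B. \<Sum>a\<in>A. g a b c d)"
proof -
  have "(\<Sum>x\<in>A \<times> B \<times> C \<times> D. g (fst x) (fst (snd x)) (fst (snd (snd x))) (snd (snd (snd x))))
      = (\<Sum>y\<in>D \<times> C \<times> B \<times> A. g (snd (snd (snd y))) (fst (snd (snd y))) (fst (snd y)) (fst y))"
    by (rule sum.reindex_bij_witness[where i = "\<lambda>(d, c, b, a). (a, b, c, d)" and j = "\<lambda>(a, b, c, d). (d, c, b, a)"]) auto
  thus ?thesis unfolding sum4_flat by simp
qed

lemma CS_sqrt:
  assumes "finite I" "\<And>x. x \<in> I \<Longrightarrow> 0 \<le> f x"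
  shows "(\<Sum>x\<in>I. sqrt (f x)) \<le> sqrt (real (card I) * (\<Sum>x\<in>I. f x))"
proof -
  have "(\<Sum>x\<in>I. sqrt (f x)) = (\<Sum>x\<in>I. \<bar>sqrt (f x)\<bar> * \<bar>1\<bar>)" using assms(2) by simp
  also have "\<dots> \<le> L2_set (\<lambda>x. sqrt (f x)) I * L2_set (\<lambda>x. 1) I" by (rule L2_set_mult_ineq)
  also have "L2_set (\<lambda>x. sqrt (f x)) I = sqrt (\<Sum>x\<in>I. f x)"
    unfolding L2_set_def using assms(2) by (simp cong: sum.cong)
  also have "L2_set (\<lambda>x. 1) I = sqrt (real (card I))" by (simp add: L2_set_constant)
  finally show ?thesis by (simp add: real_sqrt_mult mult.commute)
qed

locale setting =
  fixes n m T :: nat and U :: "nat \<Rightarrow> nat \<Rightarrow> qmat" and ch :: "nat \<Rightarrow> nat \<Rightarrow> bool"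
    and Acc :: "nat \<Rightarrow> (nat \<times> nat \<times> nat) set" and L k K :: nat
  assumes n: "0 < n" and V: "valid_alg n m T U" and k1: "1 \<le> k" and kK: "k \<le> K"
    and LkK: "k + K = L" and M: "2 ^ (L + 1) < (2::nat) ^ n"
begin

abbreviation "Lk \<equiv> {a :: bool list. length a = k}"
abbreviation "Lb \<equiv> {b :: bool list. length b = K}"

definition cQ :: real where "cQ = 2 ^ k * 2 ^ K * 2 ^ n * real (card (perms n))"

lemma PP: "\<sigma> \<in> perms n \<Longrightarrow> \<sigma> permutes strs n" by (simp add: perms_def)

lemma y2s: "\<sigma> \<in> perms n \<Longrightarrow> r \<in> strs n \<Longrightarrow> wlk \<sigma> (\<sigma> r) b \<in> strs n"
  using n by (intro wf_strs) (auto simp: PP permutes_in_image)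

lemma notPF0: "(\<Sum>\<sigma>\<in>perms n. if \<not> PF \<sigma> 0 L then 1 else 0) \<le> beta n L * real (card (perms n))"
proof -
  have "(\<Sum>\<sigma>\<in>perms n. if \<not> PF \<sigma> 0 L then 1 else (0::real)) = real (card {\<sigma> \<in> perms n. \<not> PF \<sigma> 0 L})"
    by (simp add: cnt)
  also have "\<dots> \<le> beta n L * real (card (perms n))" using PF_bound[OF n zero_strs M] by (simp add: beta_def)
  finally show ?thesis .
qed

lemma S_u:
  assumes t: "t \<le> T" and h: "\<And>\<sigma>. hh \<sigma> = uu \<sigma> \<or> hh \<sigma> = (\<lambda>a. \<sigma> (uu \<sigma> a))"
  shows "(\<Sum>a\<in>Lk. \<Sum>b\<in>Lb. \<Sum>r\<in>strs n. \<Sum>\<sigma>\<in>perms n. qq n m U ch \<sigma> (wlk \<sigma> (\<sigma> r) b) t (hh \<sigma> a))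
    \<le> cQ * (1 / 2 ^ k + beta n L)"
proof -
  have kL: "k \<le> L" using LkK by simp
  have "(\<Sum>a\<in>Lk. \<Sum>b\<in>Lb. \<Sum>r\<in>strs n. \<Sum>\<sigma>\<in>perms n. qq n m U ch \<sigma> (wlk \<sigma> (\<sigma> r) b) t (hh \<sigma> a))
      = (\<Sum>\<sigma>\<in>perms n. \<Sum>r\<in>strs n. \<Sum>b\<in>Lb. \<Sum>a\<in>Lk. qq n m U ch \<sigma> (wlk \<sigma> (\<sigma> r) b) t (hh \<sigma> a))"
    by (rule sum4_rev)
  also have "\<dots> \<le> (\<Sum>\<sigma>\<in>perms n. \<Sum>r\<in>strs n. \<Sum>b\<in>Lb. 1 + 2 ^ k * (if \<not> PF \<sigma> 0 L then 1 else 0))"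
    by (intro sum_mono W_u[OF n V y2s _ t k1 kL h]) auto
  also have "\<dots> = 2 ^ n * 2 ^ K * (real (card (perms n)) + 2 ^ k * (\<Sum>\<sigma>\<in>perms n. if \<not> PF \<sigma> 0 L then 1 else 0))"
    by (simp add: card_bl sum.distrib sum_distrib_left algebra_simps)
  also have "\<dots> \<le> 2 ^ n * 2 ^ K * (real (card (perms n)) + 2 ^ k * (beta n L * real (card (perms n))))"
    using notPF0 by (intro mult_left_mono add_left_mono) auto
  also have "\<dots> = cQ * (1 / 2 ^ k + beta n L)" by (simp add: cQ_def field_simps)
  finally show ?thesis .
qed

lemma S_r:
  assumes t: "t \<le> T" and h: "\<And>\<sigma>. \<sigma> \<in> perms n \<Longrightarrow> bij_betw (hh \<sigma>) (strs n) (strs n)"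
  shows "(\<Sum>a\<in>Lk. \<Sum>b\<in>Lb. \<Sum>r\<in>strs n. \<Sum>\<sigma>\<in>perms n. qq n m U ch \<sigma> (wlk \<sigma> (\<sigma> r) b) t (hh \<sigma> r))
    \<le> cQ * (1 / 2 ^ K + beta n L)"
proof -
  have KL: "K \<le> L" using LkK by simp
  have "(\<Sum>a\<in>Lk. \<Sum>b\<in>Lb. \<Sum>r\<in>strs n. \<Sum>\<sigma>\<in>perms n. qq n m U ch \<sigma> (wlk \<sigma> (\<sigma> r) b) t (hh \<sigma> r))
      = (\<Sum>\<sigma>\<in>perms n. \<Sum>r\<in>strs n. \<Sum>b\<in>Lb. \<Sum>a\<in>Lk. qq n m U ch \<sigma> (wlk \<sigma> (\<sigma> r) b) t (hh \<sigma> r))"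
    by (rule sum4_rev)
  also have "\<dots> = 2 ^ k * (\<Sum>\<sigma>\<in>perms n. \<Sum>r\<in>strs n. \<Sum>b\<in>Lb. qq n m U ch \<sigma> (wlk \<sigma> (\<sigma> r) b) t (hh \<sigma> r))"
    by (simp add: card_bl sum_distrib_left)
  also have "\<dots> \<le> 2 ^ k * (\<Sum>\<sigma>\<in>perms n. 2 ^ n + 2 ^ K * (\<Sum>r\<in>strs n. if \<not> PF \<sigma> (\<sigma> r) L then 1 else 0))"
    by (intro mult_left_mono sum_mono W_r[OF n V _ t KL h]) auto
  also have "\<dots> = 2 ^ k * (2 ^ n * real (card (perms n)) + 2 ^ K * (\<Sum>\<sigma>\<in>perms n. \<Sum>r\<in>strs n. if \<not> PF \<sigma> (\<sigma> r) L then 1 else 0))"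
    by (simp add: sum.distrib sum_distrib_left)
  also have "\<dots> \<le> 2 ^ k * (2 ^ n * real (card (perms n)) + 2 ^ K * (2 ^ n * beta n L * real (card (perms n))))"
    using sum_PF_shift[OF n M] by (intro mult_left_mono add_left_mono) auto
  also have "\<dots> = cQ * (1 / 2 ^ K + beta n L)" by (simp add: cQ_def field_simps)
  finally show ?thesis .
qed


lemma card_Q: "real (card (Lk \<times> Lb \<times> strs n \<times> perms n)) = cQ"
  by (simp add: cQ_def card_cartesian_product card_bl)

lemma cQ_nonneg: "0 \<le> cQ" by (simp add: cQ_def)

lemma flat_sqrt:
  assumes g0: "\<And>a b r \<sigma>. 0 \<le> g a b r \<sigma>"
    and gB: "(\<Sum>a\<in>Lk. \<Sum>b\<in>Lb. \<Sum>r\<in>strs n. \<Sum>\<sigma>\<in>perms n. g a b r \<sigma>) \<le> cQ * B"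
  shows "(\<Sum>a\<in>Lk. \<Sum>b\<in>Lb. \<Sum>r\<in>strs n. \<Sum>\<sigma>\<in>perms n. sqrt (g a b r \<sigma>)) \<le> cQ * sqrt B"
proof -
  let ?Q = "Lk \<times> Lb \<times> strs n \<times> perms n"
  let ?g = "\<lambda>x. g (fst x) (fst (snd x)) (fst (snd (snd x))) (snd (snd (snd x)))"
  have fQ: "finite ?Q" by simp
  have "(\<Sum>a\<in>Lk. \<Sum>b\<in>Lb. \<Sum>r\<in>strs n. \<Sum>\<sigma>\<in>perms n. sqrt (g a b r \<sigma>)) = (\<Sum>x\<in>?Q. sqrt (?g x))"
    by (rule sum4_flat)
  also have "\<dots> \<le> sqrt (real (card ?Q) * (\<Sum>x\<in>?Q. ?g x))" by (rule CS_sqrt[OF fQ]) (simp add: g0)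
  also have "(\<Sum>x\<in>?Q. ?g x) = (\<Sum>a\<in>Lk. \<Sum>b\<in>Lb. \<Sum>r\<in>strs n. \<Sum>\<sigma>\<in>perms n. g a b r \<sigma>)"
    by (rule sum4_flat[symmetric])
  also have "sqrt (real (card ?Q) * \<dots>) \<le> sqrt (cQ * (cQ * B))"
    unfolding card_Q using gB cQ_nonneg by (intro real_sqrt_le_mono mult_left_mono) auto
  also have "\<dots> = cQ * sqrt B" using cQ_nonneg
    by (simp add: real_sqrt_mult mult.assoc[symmetric])
  finally show ?thesis .
qed

lemma sumFF:
  "(\<Sum>a\<in>Lk. \<Sum>b\<in>Lb. \<Sum>r\<in>strs n. \<Sum>\<sigma>\<in>perms n. FF n m T U ch \<sigma> a b r)
     \<le> 16 * real T * cQ * sqrt (1 / 2 ^ k + beta n L)"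
proof -
  let ?Q = "Lk \<times> Lb \<times> strs n \<times> perms n"
  define B where "B = 1 / 2 ^ k + beta n L"
  define G where "G j t a b r \<sigma> = qq n m U ch \<sigma> (wlk \<sigma> (\<sigma> r) b) t
      (if j = (0::nat) then uu \<sigma> a else if j = 1 then r else if j = 2 then \<sigma> (uu \<sigma> a) else \<sigma> r)" for j t a b r \<sigma>
  let ?O = "\<lambda>g. (\<Sum>a\<in>Lk. \<Sum>b\<in>Lb. \<Sum>r\<in>strs n. \<Sum>\<sigma>\<in>perms n. g a b r \<sigma>)"
  have BK: "1 / 2 ^ K + beta n L \<le> B" unfolding B_def using kK
    by (simp add: frac_le power_increasing)
  have bnd: "?O (G j t) \<le> cQ * B" if t: "t < T" and j: "j < 4" for j t
  proof -
    have jj: "j = 0 \<or> j = 1 \<or> j = 2 \<or> j = 3" using j by auto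
    show ?thesis
    proof (cases "j = 0 \<or> j = 2")
      case True
      define hh where "hh \<sigma> = (if j = 0 then uu \<sigma> else (\<lambda>a. \<sigma> (uu \<sigma> a)))" for \<sigma>
      have "?O (G j t) = (\<Sum>a\<in>Lk. \<Sum>b\<in>Lb. \<Sum>r\<in>strs n. \<Sum>\<sigma>\<in>perms n. qq n m U ch \<sigma> (wlk \<sigma> (\<sigma> r) b) t (hh \<sigma> a))"
        using True by (elim disjE) (simp_all add: G_def hh_def)
      also have "\<dots> \<le> cQ * B" unfolding B_def by (rule S_u) (use t in \<open>auto simp: hh_def\<close>)
      finally show ?thesis .
    next
      case False
      hence j13: "j = 1 \<or> j = 3" using jj by auto
      define hh where "hh \<sigma> = (if j = 1 then id else \<sigma>)" for \<sigma> :: "nat \<Rightarrow> nat"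
      have "?O (G j t) = (\<Sum>a\<in>Lk. \<Sum>b\<in>Lb. \<Sum>r\<in>strs n. \<Sum>\<sigma>\<in>perms n. qq n m U ch \<sigma> (wlk \<sigma> (\<sigma> r) b) t (hh \<sigma> r))"
        using j13 by (elim disjE) (simp_all add: G_def hh_def)
      also have "\<dots> \<le> cQ * (1 / 2 ^ K + beta n L)" by (rule S_r) (use t in \<open>auto simp: hh_def perms_bij\<close>)
      also have "\<dots> \<le> cQ * B" using BK cQ_nonneg by (rule mult_left_mono)
      finally show ?thesis .
    qed
  qed
  have sq: "?O (\<lambda>a b r \<sigma>. sqrt (G j t a b r \<sigma>)) \<le> cQ * sqrt B" if "t < T" "j < 4" for j t
    by (rule flat_sqrt[OF _ bnd[OF that]]) (simp add: G_def qq_nonneg)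
  have "?O (\<lambda>a b r \<sigma>. FF n m T U ch \<sigma> a b r)
      = ?O (\<lambda>a b r \<sigma>. 4 * (\<Sum>t<T. \<Sum>j<4. sqrt (G j t a b r \<sigma>)))"
    by (simp add: FF_def G_def Let_def numeral_eq_Suc add.assoc)
  also have "\<dots> = 4 * (\<Sum>t<T. \<Sum>j<4. ?O (\<lambda>a b r \<sigma>. sqrt (G j t a b r \<sigma>)))"
  proof -
    define F where "F x t j = sqrt (G j t (fst x) (fst (snd x)) (fst (snd (snd x))) (snd (snd (snd x))))" for x t j
    have "?O (\<lambda>a b r \<sigma>. 4 * (\<Sum>t<T. \<Sum>j<4. sqrt (G j t a b r \<sigma>))) = (\<Sum>x\<in>?Q. 4 * (\<Sum>t<T. \<Sum>j<4. F x t j))"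
      unfolding F_def by (rule sum4_flat)
    also have "\<dots> = 4 * (\<Sum>x\<in>?Q. \<Sum>t<T. \<Sum>j<4. F x t j)" by (rule sum_distrib_left[symmetric])
    also have "(\<Sum>x\<in>?Q. \<Sum>t<T. \<Sum>j<4. F x t j) = (\<Sum>t<T. \<Sum>x\<in>?Q. \<Sum>j<4. F x t j)" by (rule sum.swap)
    also have "\<dots> = (\<Sum>t<T. \<Sum>j<4. \<Sum>x\<in>?Q. F x t j)" by (intro sum.cong refl) (rule sum.swap)
    also have "\<dots> = (\<Sum>t<T. \<Sum>j<4. ?O (\<lambda>a b r \<sigma>. sqrt (G j t a b r \<sigma>)))"
      unfolding F_def by (intro sum.cong refl) (rule sum4_flat[symmetric])
    finally show ?thesis .
  qed
  also have "\<dots> \<le> 4 * (\<Sum>t<T. \<Sum>j<(4::nat). cQ * sqrt B)"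
    by (intro mult_left_mono sum_mono sq) auto
  also have "\<dots> = 16 * real T * cQ * sqrt B" by simp
  finally show ?thesis unfolding B_def .
qed


lemma sum_split_lists:
  "(\<Sum>a\<in>Lk. \<Sum>b\<in>Lb. g (a @ b)) = (\<Sum>bs\<in>{bs :: bool list. length bs = L}. g bs)"
proof -
  have "(\<Sum>a\<in>Lk. \<Sum>b\<in>Lb. g (a @ b)) = (\<Sum>p\<in>Lk \<times> Lb. g (fst p @ snd p))"
    by (simp add: sum.cartesian_product split_def)
  also have "\<dots> = (\<Sum>bs\<in>{bs :: bool list. length bs = L}. g bs)"
    by (rule sum.reindex_bij_witness[where i = "\<lambda>bs. (take k bs, drop k bs)" and j = "\<lambda>p. fst p @ snd p"])
       (use LkK in auto)
  finally show ?thesis .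
qed

abbreviation "AA \<equiv> accept_prob n m T U ch Acc"

lemma sumD:
  "(\<Sum>a\<in>Lk. \<Sum>b\<in>Lb. \<Sum>r\<in>strs n. \<Sum>\<sigma>\<in>perms n. AA \<sigma> (wlk \<sigma> (\<sigma> (uu \<sigma> a)) b))
   = 2 ^ n * (\<Sum>\<sigma>\<in>perms n. \<Sum>bs\<in>{bs. length bs = L}. AA \<sigma> (walk \<sigma> bs))"
proof -
  have e: "AA \<sigma> (wlk \<sigma> (\<sigma> (uu \<sigma> a)) b) = AA \<sigma> (walk \<sigma> (a @ b))" if "a \<in> Lk" for a b \<sigma>
  proof -
    have "a \<noteq> []" using that k1 by auto
    thus ?thesis by (simp add: walk_wf wf_append wf_uu)
  qed
  have "(\<Sum>a\<in>Lk. \<Sum>b\<in>Lb. \<Sum>r\<in>strs n. \<Sum>\<sigma>\<in>perms n. AA \<sigma> (wlk \<sigma> (\<sigma> (uu \<sigma> a)) b))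
      = (\<Sum>a\<in>Lk. \<Sum>b\<in>Lb. 2 ^ n * (\<Sum>\<sigma>\<in>perms n. AA \<sigma> (walk \<sigma> (a @ b))))"
    using e by (intro sum.cong refl) simp
  also have "\<dots> = 2 ^ n * (\<Sum>a\<in>Lk. \<Sum>b\<in>Lb. \<Sum>\<sigma>\<in>perms n. AA \<sigma> (walk \<sigma> (a @ b)))"
    by (simp add: sum_distrib_left)
  also have "(\<Sum>a\<in>Lk. \<Sum>b\<in>Lb. \<Sum>\<sigma>\<in>perms n. AA \<sigma> (walk \<sigma> (a @ b)))
      = (\<Sum>bs\<in>{bs. length bs = L}. \<Sum>\<sigma>\<in>perms n. AA \<sigma> (walk \<sigma> bs))"
    by (rule sum_split_lists)
  also have "\<dots> = (\<Sum>\<sigma>\<in>perms n. \<Sum>bs\<in>{bs. length bs = L}. AA \<sigma> (walk \<sigma> bs))"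
    by (rule sum.swap)
  finally show ?thesis .
qed

lemma sumU:
  "(\<Sum>a\<in>Lk. \<Sum>b\<in>Lb. \<Sum>r\<in>strs n. \<Sum>\<sigma>\<in>perms n. AA \<sigma> (wlk \<sigma> (\<sigma> r) b))
   = 2 ^ L * (\<Sum>\<sigma>\<in>perms n. \<Sum>y\<in>strs n. AA \<sigma> y)"
proof -
  have bj: "(\<Sum>r\<in>strs n. AA \<sigma> (wlk \<sigma> (\<sigma> r) b)) = (\<Sum>y\<in>strs n. AA \<sigma> y)" if "\<sigma> \<in> perms n" for \<sigma> b
  proof -
    have "bij_betw ((\<lambda>x. wlk \<sigma> x b) \<circ> \<sigma>) (strs n) (strs n)"
      by (rule bij_betw_trans[OF perms_bij[OF that] wf_bij[OF PP[OF that] n]])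
    thus ?thesis using sum.reindex_bij_betw[of "(\<lambda>x. wlk \<sigma> x b) \<circ> \<sigma>" "strs n" "strs n" "AA \<sigma>"] by simp
  qed
  have "(\<Sum>a\<in>Lk. \<Sum>b\<in>Lb. \<Sum>r\<in>strs n. \<Sum>\<sigma>\<in>perms n. AA \<sigma> (wlk \<sigma> (\<sigma> r) b))
     = (\<Sum>\<sigma>\<in>perms n. \<Sum>r\<in>strs n. \<Sum>b\<in>Lb. \<Sum>a\<in>Lk. AA \<sigma> (wlk \<sigma> (\<sigma> r) b))" by (rule sum4_rev)
  also have "\<dots> = (\<Sum>\<sigma>\<in>perms n. 2 ^ k * (\<Sum>r\<in>strs n. \<Sum>b\<in>Lb. AA \<sigma> (wlk \<sigma> (\<sigma> r) b)))"
    by (simp add: card_bl sum_distrib_left)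
  also have "\<dots> = (\<Sum>\<sigma>\<in>perms n. 2 ^ k * (\<Sum>b\<in>Lb. \<Sum>r\<in>strs n. AA \<sigma> (wlk \<sigma> (\<sigma> r) b)))"
    by (intro sum.cong refl arg_cong[where f = "\<lambda>x. 2 ^ k * x"]) (rule sum.swap)
  also have "\<dots> = (\<Sum>\<sigma>\<in>perms n. 2 ^ k * (\<Sum>b\<in>Lb. \<Sum>y\<in>strs n. AA \<sigma> y))"
  proof (rule sum.cong[OF refl])
    fix \<sigma> assume "\<sigma> \<in> perms n"
    thus "2 ^ k * (\<Sum>b\<in>Lb. \<Sum>r\<in>strs n. AA \<sigma> (wlk \<sigma> (\<sigma> r) b)) = 2 ^ k * (\<Sum>b\<in>Lb. \<Sum>y\<in>strs n. AA \<sigma> y)"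
      using bj by simp
  qed
  also have "\<dots> = (\<Sum>\<sigma>\<in>perms n. 2 ^ k * 2 ^ K * (\<Sum>y\<in>strs n. AA \<sigma> y))"
    by (simp add: card_bl mult.assoc)
  also have "\<dots> = 2 ^ L * (\<Sum>\<sigma>\<in>perms n. \<Sum>y\<in>strs n. AA \<sigma> y)"
  proof -
    have "(2::real) ^ L = 2 ^ k * 2 ^ K" using LkK by (simp add: power_add[symmetric])
    thus ?thesis by (simp only: sum_distrib_left[symmetric])
  qed
  finally show ?thesis .
qed

lemma card_perms_pos: "0 < card (perms n)"
proof -
  have "id \<in> perms n" by (simp add: perms_def permutes_id)
  thus ?thesis using finite_perms card_gt_0_iff by blast
qed

lemma main_bound:
  "pD n L m T U ch Acc - pU n m T U ch Acc
     \<le> 4 * beta n L + 6 * real L / 2 ^ n + 16 * real T * sqrt (1 / 2 ^ k + beta n L)"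
proof -
  let ?P = "perms n"
  define cP where "cP = real (card ?P)"
  have cP: "0 < cP" using card_perms_pos by (simp add: cP_def)
  define XD where "XD = (\<Sum>\<sigma>\<in>?P. \<Sum>bs\<in>{bs. length bs = L}. AA \<sigma> (walk \<sigma> bs))"
  define XU where "XU = (\<Sum>\<sigma>\<in>?P. \<Sum>y\<in>strs n. AA \<sigma> y)"
  define D1 where "D1 a b r = (\<Sum>\<sigma>\<in>?P. AA \<sigma> (wlk \<sigma> (\<sigma> (uu \<sigma> a)) b))" for a b :: "bool list" and r :: nat
  define D2 where "D2 a b r = (\<Sum>\<sigma>\<in>?P. AA \<sigma> (wlk \<sigma> (\<sigma> r) b))" for a b :: "bool list" and r :: nat
  define Bd where "Bd a b r = real (card {\<sigma> \<in> ?P. \<not> good \<sigma> a b r})" for a b r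
  define FS where "FS a b r = (\<Sum>\<sigma>\<in>?P. FF n m T U ch \<sigma> a b r)" for a b r
  have "2 ^ n * XD - 2 ^ L * XU = (\<Sum>a\<in>Lk. \<Sum>b\<in>Lb. \<Sum>r\<in>strs n. D1 a b r - D2 a b r)"
    unfolding XD_def XU_def D1_def D2_def sumD[symmetric] sumU[symmetric] by (simp add: sum_subtractf)
  also have "\<dots> \<le> (\<Sum>a\<in>Lk. \<Sum>b\<in>Lb. \<Sum>r\<in>strs n. 2 * Bd a b r + FS a b r)"
  proof (intro sum_mono)
    fix a b r assume r: "r \<in> strs n"
    have "\<bar>D1 a b r - D2 a b r\<bar> \<le> 2 * Bd a b r + FS a b r"
      unfolding D1_def D2_def Bd_def FS_def by (rule per_abr[OF n V r])
    thus "D1 a b r - D2 a b r \<le> 2 * Bd a b r + FS a b r" by linarith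
  qed
  also have "\<dots> = 2 * (\<Sum>a\<in>Lk. \<Sum>b\<in>Lb. \<Sum>r\<in>strs n. Bd a b r) + (\<Sum>a\<in>Lk. \<Sum>b\<in>Lb. \<Sum>r\<in>strs n. FS a b r)"
    by (simp add: sum.distrib sum_distrib_left)
  finally have s1: "2 ^ n * XD - 2 ^ L * XU \<le> 2 * (\<Sum>a\<in>Lk. \<Sum>b\<in>Lb. \<Sum>r\<in>strs n. Bd a b r) + (\<Sum>a\<in>Lk. \<Sum>b\<in>Lb. \<Sum>r\<in>strs n. FS a b r)" .
  have s2: "(\<Sum>a\<in>Lk. \<Sum>b\<in>Lb. \<Sum>r\<in>strs n. Bd a b r) \<le> (\<Sum>a\<in>Lk. \<Sum>b\<in>Lb. cP * (2 * 2 ^ n * beta n L + 3 * real L))"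
  proof (intro sum_mono)
    fix a b assume a: "a \<in> Lk" and b: "b \<in> Lb"
    have "a \<noteq> []" using a k1 by auto
    moreover have "length a + length b \<le> L" using a b LkK by simp
    ultimately show "(\<Sum>r\<in>strs n. Bd a b r) \<le> cP * (2 * 2 ^ n * beta n L + 3 * real L)"
      unfolding Bd_def cP_def by (rule bad_total[OF n _ _ M])
  qed
  have s3: "(\<Sum>a\<in>Lk. \<Sum>b\<in>Lb. \<Sum>r\<in>strs n. FS a b r) \<le> 16 * real T * cQ * sqrt (1 / 2 ^ k + beta n L)"
    unfolding FS_def by (rule sumFF)
  have main0: "2 ^ n * XD - 2 ^ L * XU
      \<le> 2 * (\<Sum>a\<in>Lk. \<Sum>b\<in>Lb. cP * (2 * 2 ^ n * beta n L + 3 * real L)) + 16 * real T * cQ * sqrt (1 / 2 ^ k + beta n L)"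
    using s1 s2 s3 by linarith
  have p2: "(\<Sum>a\<in>Lk. \<Sum>b\<in>Lb. cP * (2 * 2 ^ n * beta n L + 3 * real L)) = 2 ^ L * (cP * (2 * 2 ^ n * beta n L + 3 * real L))"
  proof -
    have "(2::real) ^ L = 2 ^ k * 2 ^ K" using LkK by (simp add: power_add[symmetric])
    thus ?thesis by (simp add: card_bl)
  qed
  have main: "2 ^ n * XD - 2 ^ L * XU
      \<le> 2 * (2 ^ L * (cP * (2 * 2 ^ n * beta n L + 3 * real L))) + 16 * real T * cQ * sqrt (1 / 2 ^ k + beta n L)"
    using main0 unfolding p2 .
  have cQ': "cQ = 2 ^ L * 2 ^ n * cP"
  proof -
    have "(2::real) ^ L = 2 ^ k * 2 ^ K" using LkK by (simp add: power_add[symmetric])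
    thus ?thesis unfolding cQ_def cP_def by simp
  qed
  have "pD n L m T U ch Acc - pU n m T U ch Acc = (2 ^ n * XD - 2 ^ L * XU) / (2 ^ L * 2 ^ n * cP)"
    unfolding pD_def pU_def XD_def[symmetric] XU_def[symmetric] cP_def[symmetric] using cP
    by (simp add: field_simps)
  also have "\<dots> \<le> (2 * (2 ^ L * (cP * (2 * 2 ^ n * beta n L + 3 * real L))) + 16 * real T * cQ * sqrt (1 / 2 ^ k + beta n L))
        / (2 ^ L * 2 ^ n * cP)"
    using main cP by (intro divide_right_mono) auto
  also have "\<dots> = 4 * beta n L + 6 * real L / 2 ^ n + 16 * real T * sqrt (1 / 2 ^ k + beta n L)"
    unfolding cQ' using cP by (simp add: field_simps)
  finally show ?thesis .
qed

end


lemma final_bound: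
  assumes n: "0 < n" and V: "valid_alg n m T U" and L2: "2 \<le> L" and M: "2 ^ (L + 1) < (2::nat) ^ n"
  shows "pD n L m T U ch Acc - pU n m T U ch Acc
     \<le> 4 * beta n L + 6 * real L / 2 ^ n + 16 * real T * sqrt (1 / 2 ^ (L div 2) + beta n L)"
proof -
  interpret setting n m T U ch Acc L "L div 2" "L - L div 2"
    by unfold_locales (use n V L2 M in auto)
  show ?thesis by (rule main_bound)
qed

lemma numeric:
  fixes T L n :: nat
  assumes L64: "64 \<le> L" and Ln: "4 * L \<le> n" and T: "real T < 2 powr (1/8 * real L)"
  shows "4 * beta n L + 6 * real L / 2 ^ n + 16 * real T * sqrt (1 / 2 ^ (L div 2) + beta n L) \<le> 1/3"
proof -
  define E where "E = 2 powr (1/8 * real L)"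
  have Epos: "0 < E" by (simp add: E_def)
  have E8: "E ^ 8 = 2 ^ L"
    unfolding E_def by (simp add: powr_realpow[symmetric] powr_powr)
  have E256: "256 \<le> E"
  proof -
    have "2 powr (8::real) \<le> 2 powr (1/8 * real L)" using L64 by (intro powr_mono) auto
    thus ?thesis unfolding E_def by simp
  qed
  have nL: "(2::real) ^ (4 * L) \<le> 2 ^ n" using Ln by (intro power_increasing) auto
  have E32: "E ^ 32 \<le> 2 ^ n"
  proof -
    have "E ^ 32 = (E ^ 8) ^ 4" by (simp add: power_mult[symmetric])
    also have "\<dots> = 2 ^ (4 * L)" unfolding E8 by (simp add: power_mult[symmetric] mult.commute)
    finally show ?thesis using nL by simp
  qed
  have Epow: "256 \<le> E ^ j" if "1 \<le> j" for j
  proof -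
    have "E ^ 1 \<le> E ^ j" by (rule power_increasing) (use that E256 in auto)
    thus ?thesis using E256 by simp
  qed
  have E4ge: "16 \<le> E ^ 4" using Epow[of 4] by simp
  have hk: "1 / 2 ^ (L div 2) \<le> 2 / E ^ 4"
  proof -
    have "L \<le> 2 * (L div 2) + 1" by simp
    hence "(2::real) ^ L \<le> 2 ^ (2 * (L div 2) + 1)" by (intro power_increasing) auto
    hence "E ^ 8 \<le> 2 * (2 ^ (L div 2)) ^ 2" unfolding E8 by (simp add: power_mult[symmetric] power_add mult.commute)
    hence e8: "E ^ 8 \<le> 2 * (2 ^ (L div 2)) ^ 2" .
    have "(E ^ 4) ^ 2 = E ^ 8" by (simp add: power_mult[symmetric])
    moreover have "(2 * 2 ^ (L div 2)) ^ 2 = 4 * ((2::real) ^ (L div 2)) ^ 2" by (simp add: power_mult_distrib)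
    moreover have "0 \<le> ((2::real) ^ (L div 2)) ^ 2" by simp
    ultimately have "(E ^ 4) ^ 2 \<le> (2 * 2 ^ (L div 2)) ^ 2" using e8 by linarith
    hence "E ^ 4 \<le> 2 * 2 ^ (L div 2)" by (rule power2_le_imp_le) simp
    thus ?thesis using Epos by (simp add: field_simps)
  qed
  have L1n: "L + 2 \<le> n" using Ln L64 by simp
  have den: "2 ^ n / 2 \<le> (2::real) ^ n - 2 ^ (L + 1)"
  proof -
    have "(2::real) ^ (L + 2) \<le> 2 ^ n" using L1n by (intro power_increasing) auto
    thus ?thesis by simp
  qed
  have hb: "beta n L \<le> 1 / E ^ 4"
  proof -
    have "0 < (2::real) ^ n / 2" by simp
    hence dpos: "0 < (2::real) ^ n - 2 ^ (L + 1)" using den by linarith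
    have "beta n L = 2 * 4 ^ (L + 1) / (2 ^ n - 2 ^ (L + 1))" by (simp add: beta_def)
    also have "\<dots> \<le> 2 * 4 ^ (L + 1) / (2 ^ n / 2)"
      using den dpos by (intro divide_left_mono) auto
    also have "\<dots> = 16 * 4 ^ L / 2 ^ n" by (simp add: field_simps)
    also have "\<dots> \<le> 16 * 4 ^ L / E ^ 32" using E32 Epos by (intro divide_left_mono) auto
    also have "(4::real) ^ L = E ^ 16"
    proof -
      have "(4::real) ^ L = (2 ^ 2) ^ L" by simp
      also have "\<dots> = (2 ^ L) ^ 2" by (simp only: power_mult[symmetric] mult.commute)
      finally have "(4::real) ^ L = (2 ^ L) ^ 2" .
      also have "\<dots> = E ^ 16" unfolding E8[symmetric] by (simp add: power_mult[symmetric])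
      finally show ?thesis .
    qed
    also have "16 * E ^ 16 / E ^ 32 = 16 / E ^ 16" using Epos by (simp add: field_simps power_add[symmetric])
    also have "\<dots> \<le> 1 / E ^ 4"
    proof -
      have "16 * E ^ 4 \<le> E ^ 16"
      proof -
        have eq: "E ^ 16 = E ^ 12 * E ^ 4" by (simp add: power_add[symmetric])
        have "16 \<le> E ^ 12" using Epow[of 12] by simp
        hence "16 * E ^ 4 \<le> E ^ 12 * E ^ 4" by (rule mult_right_mono) (use Epos in simp)
        thus ?thesis unfolding eq .
      qed
      thus ?thesis using Epos by (simp add: field_simps)
    qed
    finally show ?thesis .
  qed
  have hL: "6 * real L / 2 ^ n \<le> 1 / E ^ 4"
  proof -
    have "real L \<le> 2 ^ L" using less_exp[of L] by (metis of_nat_le_iff of_nat_numeral of_nat_power less_imp_le_nat)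
    hence "6 * real L / 2 ^ n \<le> 6 * E ^ 8 / E ^ 32" unfolding E8[symmetric] using E32 Epos
      by (intro frac_le) auto
    also have "\<dots> = 6 / E ^ 24" using Epos by (simp add: field_simps power_add[symmetric])
    also have "\<dots> \<le> 1 / E ^ 4"
    proof -
      have "6 * E ^ 4 \<le> E ^ 24"
      proof -
        have eq: "E ^ 24 = E ^ 20 * E ^ 4" by (simp add: power_add[symmetric])
        have "6 \<le> E ^ 20" using Epow[of 20] by simp
        hence "6 * E ^ 4 \<le> E ^ 20 * E ^ 4" by (rule mult_right_mono) (use Epos in simp)
        thus ?thesis unfolding eq .
      qed
      thus ?thesis using Epos by (simp add: field_simps)
    qed
    finally show ?thesis .
  qed
  have bnn: "0 \<le> beta n L"
  proof -
    have "0 < (2::real) ^ n / 2" by simp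
    hence "0 < (2::real) ^ n - 2 ^ (L + 1)" using den by linarith
    thus ?thesis unfolding beta_def by simp
  qed
  have hs: "sqrt (1 / 2 ^ (L div 2) + beta n L) \<le> 2 / E ^ 2"
  proof -
    have sq: "(2 / E ^ 2) ^ 2 = 4 / E ^ 4" by (simp add: power_divide power_mult[symmetric])
    have "2 / E ^ 4 + 1 / E ^ 4 = 3 / E ^ 4" by (simp add: add_divide_distrib[symmetric])
    moreover have "3 / E ^ 4 \<le> 4 / E ^ 4" using Epos by (simp add: divide_right_mono)
    ultimately have "1 / 2 ^ (L div 2) + beta n L \<le> (2 / E ^ 2) ^ 2"
      unfolding sq using hk hb by linarith
    hence "sqrt (1 / 2 ^ (L div 2) + beta n L) \<le> sqrt ((2 / E ^ 2) ^ 2)" by (rule real_sqrt_le_mono)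
    thus ?thesis using Epos by simp
  qed
  have "16 * real T * sqrt (1 / 2 ^ (L div 2) + beta n L) \<le> 16 * E * (2 / E ^ 2)"
    using T hs bnn by (intro mult_mono) (auto simp: E_def)
  also have "\<dots> = 32 / E" using Epos by (simp add: field_simps power2_eq_square)
  also have "\<dots> \<le> 1 / 8" using E256 by (simp add: field_simps)
  finally have t1: "16 * real T * sqrt (1 / 2 ^ (L div 2) + beta n L) \<le> 1 / 8" .
  have "1 / E ^ 4 \<le> 1 / 256" using Epow[of 4] by (intro divide_left_mono) auto
  thus ?thesis using t1 hb hL by linarith
qed


theorem theorem1:
  fixes len :: "nat \<Rightarrow> nat"
  assumes "(\<lambda>n. real (len n)) \<in> o(\<lambda>n. real n)"
    and "filterlim len at_top sequentially"
  shows "\<exists>c>0. \<exists>N. \<forall>n\<ge>N. \<forall>m T U ch Acc.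
           valid_alg n m T U \<longrightarrow> real T < 2 powr (c * real (len n)) \<longrightarrow>
           \<not> (pD n (len n) m T U ch Acc > 2/3 \<and> 1 - pU n m T U ch Acc > 2/3)"
proof -
  have ev1: "eventually (\<lambda>n. norm (real (len n)) \<le> 1/4 * norm (real n)) at_top"
    by (rule landau_o.smallD[OF assms(1)]) simp
  have ev2: "eventually (\<lambda>n. 64 \<le> len n) sequentially"
    using assms(2) unfolding filterlim_at_top by blast
  have "eventually (\<lambda>n. norm (real (len n)) \<le> 1/4 * norm (real n) \<and> 64 \<le> len n) sequentially"
    using ev1 ev2 by (auto intro: eventually_conj)
  then obtain N where N: "\<And>n. n \<ge> N \<Longrightarrow> norm (real (len n)) \<le> 1/4 * norm (real n) \<and> 64 \<le> len n"
    unfolding eventually_sequentially by blast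
  show ?thesis
  proof (intro exI[of _ "1/8"] conjI exI[of _ N] allI impI)
    show "(0::real) < 1/8" by simp
    fix n m T U ch Acc
    assume n: "N \<le> n" and V: "valid_alg n m T U" and T: "real T < 2 powr (1/8 * real (len n))"
    define L where "L = len n"
    have L64: "64 \<le> L" using N[OF n] by (simp add: L_def)
    have "real L \<le> 1/4 * real n" using N[OF n] by (simp add: L_def)
    hence Ln: "4 * L \<le> n" by linarith
    have n0: "0 < n" using L64 Ln by linarith
    have M: "2 ^ (L + 1) < (2::nat) ^ n" using L64 Ln by (intro power_strict_increasing) auto
    have "pD n L m T U ch Acc - pU n m T U ch Acc
        \<le> 4 * beta n L + 6 * real L / 2 ^ n + 16 * real T * sqrt (1 / 2 ^ (L div 2) + beta n L)"
      by (rule final_bound[OF n0 V _ M]) (use L64 in simp)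
    also have "\<dots> \<le> 1/3" by (rule numeric[OF L64 Ln]) (use T L_def in simp)
    finally show "\<not> (pD n (len n) m T U ch Acc > 2/3 \<and> 1 - pU n m T U ch Acc > 2/3)"
      unfolding L_def by linarith
  qed
qed


end
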